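(* Let $(V_1,\dots,V_n)$ be an $n$-tuple of doubly non-commuting isometries on $H$, let $A=\{i_1,\dots,i_l\}\subseteq\{1,\dots,n\}$ ($l$ distinct indices, possibly $l=0$) with $A^c=\{j_1,\dots,j_{n-l}\}$, and let $W_A=\bigcap_{m_{j_1},\dots,m_{j_{n-l}}\ge0}V_{j_1}^{m_{j_1}}\cdots V_{j_{n-l}}^{m_{j_{n-l}}}\big(\bigcap_{i\in A}\ker V_i^*\big)$ (for $A=\emptyset$ read $\bigcap_{i\in A}\ker V_i^*$ as $H$; for $A=\{1,\dots,n\}$, $W_A=\bigcap_{i=1}^n\ker V_i^*$). Then $W_A\subseteq H_A$ and $H_A=\bigoplus_{k_{i_1},\dots,k_{i_l}\ge0}V_{i_1}^{k_{i_1}}\cdots V_{i_l}^{k_{i_l}}(W_A)$ as an orthogonal Hilbert direct sum (for $A=\emptyset$ this reads $H_\emptyset=W_\emptyset$). Furthermore: (1) for every $i\in A^c$, $W_A$ reduces $V_i$ and $V_i|_{W_A}$ is unitary; (2) $(V_i|_{W_A})^*(V_j|_{W_A})=\overline{z_{ij}}(V_j|_{W_A})(V_i|_{W_A})^*$ for all $i\ne j$ in $A^c$; (3) $V_i^*|_{W_A}=0$ for every $i\in A$; (4) for all $r\in\{1,\dots,l\}$ and $k_{i_1},\dots,k_{i_l}\ge0$, $V_{i_r}\big(V_{i_1}^{k_{i_1}}\cdots V_{i_r}^{k_{i_r}}\cdots V_{i_l}^{k_{i_l}}(W_A)\big)=V_{i_1}^{k_{i_1}}\cdots V_{i_r}^{k_{i_r}+1}\cdots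 V_{i_l}^{k_{i_l}}(W_A)$.
   Context: Fix $n\ge1$ and $z_{ij}\in\mathbb T$ ($i\ne j$) with $z_{ji}=\overline{z_{ij}}$; $(V_1,\dots,V_n)$ is doubly non-commuting if the $V_i$ are isometries on $H$ with $V_i^*V_j=\overline{z_{ij}}V_jV_i^*$ for $i\ne j$. For an isometry $S$: $H^{\mathrm{iso}}(S)=\bigoplus_{k\ge0}S^k(\ker S^* )$, $H^{\mathrm{uni}}(S)=\bigcap_{k\ge0}S^k(H)$. With $P_i^{\mathrm{iso}},P_i^{\mathrm{uni}}$ the (pairwise commuting) projections onto $H^{\mathrm{iso}}(V_i),H^{\mathrm{uni}}(V_i)$, set $H_A=\big(\prod_{i\in A}P_i^{\mathrm{iso}}\prod_{i\in A^c}P_i^{\mathrm{uni}}\big)(H)$, where $A^c$ is the complement in $\{1,\dots,n\}$ and empty products are the identity. Subspaces are closed. *)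

theory Defs
  imports "HOL-Analysis.Analysis"
begin

class complex_inner = real_normed_vector +
  fixes scaleC :: "complex \<Rightarrow> 'a \<Rightarrow> 'a" (infixr "*\<^sub>C" 75)
    and cinner :: "'a \<Rightarrow> 'a \<Rightarrow> complex"
  assumes scaleC_add_right: "a *\<^sub>C (x + y) = a *\<^sub>C x + a *\<^sub>C y"
    and scaleC_add_left: "(a + b) *\<^sub>C x = a *\<^sub>C x + b *\<^sub>C x"
    and scaleC_scaleC: "a *\<^sub>C (b *\<^sub>C x) = (a * b) *\<^sub>C x"
    and scaleC_one: "1 *\<^sub>C x = x"
    and scaleR_scaleC: "scaleR r x = complex_of_real r *\<^sub>C x"
    and cinner_add_right: "cinner x (y + z) = cinner x y + cinner x z"
    and cinner_scaleC_right: "cinner x (a *\<^sub>C y) = a * cinner x y"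
    and cinner_commute: "cinner y x = cnj (cinner x y)"
    and norm_eq_sqrt_cinner: "norm x = sqrt (Re (cinner x x))"

class chilbert_space = complex_inner + complete_space

definition csubspace :: "'a::complex_inner set \<Rightarrow> bool" where
  "csubspace S \<longleftrightarrow> 0 \<in> S \<and> (\<forall>x\<in>S. \<forall>y\<in>S. x + y \<in> S) \<and> (\<forall>a. \<forall>x\<in>S. a *\<^sub>C x \<in> S)"

definition cspan :: "'a::complex_inner set \<Rightarrow> 'a set" where
  "cspan S = \<Inter> {T. csubspace T \<and> S \<subseteq> T}"

definition ccspan :: "'a::complex_inner set \<Rightarrow> 'a set" where
  "ccspan S = closure (cspan S)"

definition corthogonal :: "'a::complex_inner set \<Rightarrow> 'a set \<Rightarrow> bool" where
  "corthogonal M N \<longleftrightarrow> (\<forall>x\<in>M. \<forall>y\<in>N. cinner x y = 0)"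

definition bounded_clinear :: "('a::complex_inner \<Rightarrow> 'a) \<Rightarrow> bool" where
  "bounded_clinear T \<longleftrightarrow> (\<forall>x y. T (x + y) = T x + T y) \<and> (\<forall>a x. T (a *\<^sub>C x) = a *\<^sub>C T x)
     \<and> (\<exists>K. \<forall>x. norm (T x) \<le> norm x * K)"

definition is_adjoint :: "('a::complex_inner \<Rightarrow> 'a) \<Rightarrow> ('a \<Rightarrow> 'a) \<Rightarrow> bool" where
  "is_adjoint T S \<longleftrightarrow> (\<forall>x y. cinner (T x) y = cinner x (S y))"

text \<open>S is the adjoint of the restriction of T to the subspace W (regarded as an operator on W).\<close>
definition is_adjoint_on :: "'a::complex_inner set \<Rightarrow> ('a \<Rightarrow> 'a) \<Rightarrow> ('a \<Rightarrow> 'a) \<Rightarrow> bool" where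
  "is_adjoint_on W T S \<longleftrightarrow> (\<forall>x\<in>W. S x \<in> W) \<and> (\<forall>x\<in>W. \<forall>y\<in>W. cinner (T x) y = cinner x (S y))"

definition isometry :: "('a::complex_inner \<Rightarrow> 'a) \<Rightarrow> bool" where
  "isometry V \<longleftrightarrow> bounded_clinear V \<and> (\<forall>x. norm (V x) = norm x)"

definition ker :: "('a::complex_inner \<Rightarrow> 'a) \<Rightarrow> 'a set" where
  "ker T = {x. T x = 0}"

text \<open>H_iso(S) = orthogonal direct sum of S^k(ker S^*), i.e. the closed span of these (mutually
  orthogonal) subspaces; H_uni(S) = intersection of the ranges of S^k.\<close>
definition H_iso :: "('a::complex_inner \<Rightarrow> 'a) \<Rightarrow> ('a \<Rightarrow> 'a) \<Rightarrow> 'a set" where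
  "H_iso S Ss = ccspan (\<Union>k. (S ^^ k) ` ker Ss)"

definition H_uni :: "('a::complex_inner \<Rightarrow> 'a) \<Rightarrow> 'a set" where
  "H_uni S = (\<Inter>k. range (S ^^ k))"

definition orth_proj :: "'a::complex_inner set \<Rightarrow> 'a \<Rightarrow> 'a" where
  "orth_proj M x = (THE y. y \<in> M \<and> (\<forall>m\<in>M. cinner m (x - y) = 0))"

text \<open>H_A = (prod_{i in A} P_i^iso prod_{i in A^c} P_i^uni)(H), the product taken over
  the indices 1..n in increasing order (the projections commute).\<close>
definition H_A :: "nat \<Rightarrow> (nat \<Rightarrow> 'a::complex_inner \<Rightarrow> 'a) \<Rightarrow> (nat \<Rightarrow> 'a \<Rightarrow> 'a) \<Rightarrow> nat set \<Rightarrow> 'a set" where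
  "H_A n V Vs A = range (foldr (\<circ>)
      (map (\<lambda>i. if i \<in> A then orth_proj (H_iso (V i) (Vs i)) else orth_proj (H_uni (V i))) [1..<Suc n])
      id)"

text \<open>Monomial V_{i_1}^{k_{i_1}} ... V_{i_l}^{k_{i_l}} along the list of indices is = [i_1,...,i_l]
  (exponent of V_i is k i).\<close>
definition vmon :: "(nat \<Rightarrow> 'a \<Rightarrow> 'a) \<Rightarrow> nat list \<Rightarrow> (nat \<Rightarrow> nat) \<Rightarrow> 'a \<Rightarrow> 'a" where
  "vmon V is k = foldr (\<lambda>i f. (V i ^^ k i) \<circ> f) is id"

definition doubly_noncommuting ::
  "nat \<Rightarrow> (nat \<Rightarrow> nat \<Rightarrow> complex) \<Rightarrow> (nat \<Rightarrow> 'a::complex_inner \<Rightarrow> 'a) \<Rightarrow> (nat \<Rightarrow> 'a \<Rightarrow> 'a) \<Rightarrow> bool" where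
  "doubly_noncommuting n z V Vs \<longleftrightarrow>
     (\<forall>i\<in>{1..n}. isometry (V i) \<and> is_adjoint (V i) (Vs i)) \<and>
     (\<forall>i\<in>{1..n}. \<forall>j\<in>{1..n}. i \<noteq> j \<longrightarrow>
        norm (z i j) = 1 \<and> z j i = cnj (z i j) \<and>
        (\<forall>x. Vs i (V j x) = cnj (z i j) *\<^sub>C V j (Vs i x)))"

text \<open>W_A for A enumerated by the list is and A^c by the list js.\<close>
definition W_A :: "(nat \<Rightarrow> 'a::complex_inner \<Rightarrow> 'a) \<Rightarrow> (nat \<Rightarrow> 'a \<Rightarrow> 'a) \<Rightarrow> nat list \<Rightarrow> nat list \<Rightarrow> 'a set" where
  "W_A V Vs is js = (\<Inter>m. vmon V js m ` (\<Inter>i\<in>set is. ker (Vs i)))"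

end

theory Submission
  imports Defs
begin


lemma scaleC_zero_right[simp]: "a *\<^sub>C (0::'a::complex_inner) = 0"
  by (metis add_cancel_right_right scaleC_add_right)

lemma scaleC_zero_left[simp]: "0 *\<^sub>C (x::'a::complex_inner) = 0"
  by (metis add_cancel_right_right add_0 scaleC_add_left)

lemma scaleC_minus1: "(-1) *\<^sub>C (x::'a::complex_inner) = - x"
  by (metis of_real_1 of_real_minus scaleR_minus1_left scaleR_scaleC)

lemma scaleC_diff_right: "a *\<^sub>C ((x::'a::complex_inner) - y) = a *\<^sub>C x - a *\<^sub>C y"
  by (metis add_diff_cancel diff_add_cancel scaleC_add_right)

lemma scaleC_minus_right: "a *\<^sub>C (- (x::'a::complex_inner)) = - (a *\<^sub>C x)"
  using scaleC_diff_right[of a 0 x] by simp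

lemma scaleC_diff_left: "(a - b) *\<^sub>C (x::'a::complex_inner) = a *\<^sub>C x - b *\<^sub>C x"
  by (metis add_diff_cancel diff_add_cancel scaleC_add_left)

lemma scaleC_sum_right: "a *\<^sub>C (\<Sum>i\<in>F. f i) = (\<Sum>i\<in>F. a *\<^sub>C (f i::'a::complex_inner))"
  by (induction F rule: infinite_finite_induct) (auto simp: scaleC_add_right)

lemma cinner_add_left: "cinner ((x::'a::complex_inner) + y) z = cinner x z + cinner y z"
  by (metis cinner_add_right cinner_commute complex_cnj_add)

lemma cinner_scaleC_left: "cinner (a *\<^sub>C (x::'a::complex_inner)) y = cnj a * cinner x y"
  by (metis cinner_scaleC_right cinner_commute complex_cnj_mult complex_cnj_cnj)

lemma cinner_zero_right[simp]: "cinner (x::'a::complex_inner) 0 = 0"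
  by (metis add_cancel_right_right add_0 cinner_add_right)

lemma cinner_zero_left[simp]: "cinner 0 (x::'a::complex_inner) = 0"
  by (metis cinner_commute cinner_zero_right complex_cnj_zero)

lemma cinner_minus_right: "cinner (x::'a::complex_inner) (- y) = - cinner x y"
  by (metis add.right_inverse cinner_add_right cinner_zero_right neg_eq_iff_add_eq_0)

lemma cinner_minus_left: "cinner (- (x::'a::complex_inner)) y = - cinner x y"
  by (metis cinner_commute cinner_minus_right complex_cnj_minus)

lemma cinner_diff_right: "cinner (x::'a::complex_inner) (y - z) = cinner x y - cinner x z"
proof -
  have "cinner x y = cinner x (y - z) + cinner x z" by (metis cinner_add_right diff_add_cancel)
  then show ?thesis by (simp add: algebra_simps)
qed

lemma cinner_diff_left: "cinner ((x::'a::complex_inner) - y) z = cinner x z - cinner y z"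
proof -
  have "cinner x z = cinner (x - y) z + cinner y z" by (metis cinner_add_left diff_add_cancel)
  then show ?thesis by (simp add: algebra_simps)
qed

lemma cinner_sum_right: "cinner x (\<Sum>i\<in>F. f i) = (\<Sum>i\<in>F. cinner (x::'a::complex_inner) (f i))"
  by (induction F rule: infinite_finite_induct) (auto simp: cinner_add_right)

lemma cinner_self_Im: "Im (cinner (x::'a::complex_inner) x) = 0"
proof -
  have "Im (cinner x x) = Im (cnj (cinner x x))" using cinner_commute[of x x] by metis
  then show ?thesis by simp
qed

lemma cinner_self_Re: "Re (cinner (x::'a::complex_inner) x) = norm x ^ 2"
proof -
  have r: "norm x = sqrt (Re (cinner x x))" by (rule norm_eq_sqrt_cinner)
  have "Re (cinner x x) \<ge> 0"
  proof (rule ccontr)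
    assume "\<not> ?thesis"
    then have "sqrt (Re (cinner x x)) < 0" by simp
    with r show False by (metis norm_ge_zero not_le)
  qed
  then show ?thesis using r by simp
qed

lemma cinner_self: "cinner (x::'a::complex_inner) x = complex_of_real (norm x ^ 2)"
  by (rule complex_eqI) (simp_all add: cinner_self_Re cinner_self_Im)

lemma cinner_self_eq0[simp]: "cinner (x::'a::complex_inner) x = 0 \<longleftrightarrow> x = 0"
  by (simp add: cinner_self)

lemma cinner_ext:
  assumes "\<And>y. cinner y a = cinner y (b::'a::complex_inner)" shows "a = b"
proof -
  have "cinner (a - b) (a - b) = 0" using assms by (simp add: cinner_diff_right)
  then show ?thesis by simp
qed

lemma norm_add_sq: "norm ((x::'a::complex_inner) + y) ^ 2 = norm x ^ 2 + norm y ^ 2 + 2 * Re (cinner x y)"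
proof -
  have "Re (cinner y x) = Re (cinner x y)" by (metis cinner_commute complex_cnj_cnj cnj.simps(1))
  then show ?thesis
    by (simp add: cinner_self_Re[symmetric] cinner_add_left cinner_add_right)
qed

lemma norm_diff_sq: "norm ((x::'a::complex_inner) - y) ^ 2 = norm x ^ 2 + norm y ^ 2 - 2 * Re (cinner x y)"
  using norm_add_sq[of x "- y"] by (simp add: cinner_minus_right)

lemma pythag: "cinner (x::'a::complex_inner) y = 0 \<Longrightarrow> norm (x + y) ^ 2 = norm x ^ 2 + norm y ^ 2"
  by (simp add: norm_add_sq)

lemma norm_scaleC: "norm (a *\<^sub>C (x::'a::complex_inner)) = cmod a * norm x"
proof -
  have c: "cnj a * a = complex_of_real (cmod a ^ 2)" by (metis complex_norm_square mult.commute)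
  have e: "cnj a * a * cinner x x = complex_of_real ((cmod a * norm x) ^ 2)"
    by (simp only: c cinner_self of_real_mult[symmetric] power_mult_distrib)
  have ci: "cinner (a *\<^sub>C x) (a *\<^sub>C x) = cnj a * a * cinner x x"
    by (metis cinner_scaleC_left cinner_scaleC_right mult.assoc mult.left_commute)
  have "norm (a *\<^sub>C x) ^ 2 = Re (cnj a * a * cinner x x)"
    by (simp only: cinner_self_Re[symmetric] ci)
  also have "\<dots> = (cmod a * norm x) ^ 2" by (simp only: e Re_complex_of_real)
  finally show ?thesis by (simp add: power2_eq_iff_nonneg)
qed

lemma re_cinner_le: "2 * Re (cinner (x::'a::complex_inner) y) \<le> norm x ^ 2 + norm y ^ 2"
  using norm_diff_sq[of x y] by (metis diff_ge_0_iff_ge zero_le_power2)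

lemma bounded_clinear_scaleC: "bounded_clinear (\<lambda>x::'a::complex_inner. a *\<^sub>C x)"
  unfolding bounded_clinear_def
  by (auto simp: scaleC_add_right scaleC_scaleC norm_scaleC mult.commute intro!: exI[of _ "cmod a"])

lemma bounded_clinear_bounded_linear: "bounded_clinear T \<Longrightarrow> bounded_linear T"
proof -
  assume a: "bounded_clinear T"
  then obtain K where K: "\<forall>x. norm (T x) \<le> norm x * K" unfolding bounded_clinear_def by blast
  show ?thesis
    by (rule bounded_linear_intro[where K=K]) (use a K in \<open>auto simp: bounded_clinear_def scaleR_scaleC\<close>)
qed

lemma bcl_cont: "bounded_clinear T \<Longrightarrow> continuous_on S T"
  using bounded_clinear_bounded_linear linear_continuous_on by blast

lemma bcl_add: "bounded_clinear T \<Longrightarrow> T (x + y) = T x + T y"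
  by (simp add: bounded_clinear_def)
lemma bcl_scaleC: "bounded_clinear T \<Longrightarrow> T (a *\<^sub>C x) = a *\<^sub>C T x"
  by (simp add: bounded_clinear_def)
lemma bcl_zero: "bounded_clinear T \<Longrightarrow> T 0 = 0"
  using bounded_clinear_bounded_linear linear_0 bounded_linear.linear by blast
lemma bcl_diff: "bounded_clinear T \<Longrightarrow> T (x - y) = T x - T y"
  using bounded_clinear_bounded_linear linear_diff bounded_linear.linear by blast
lemma bcl_sum: "bounded_clinear T \<Longrightarrow> T (sum f F) = (\<Sum>i\<in>F. T (f i))"
  using bounded_clinear_bounded_linear linear_sum bounded_linear.linear by blast

lemma bcl_comp: "bounded_clinear T \<Longrightarrow> bounded_clinear R \<Longrightarrow> bounded_clinear (T \<circ> R)"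
proof -
  assume t: "bounded_clinear T" and r: "bounded_clinear R"
  have "bounded_linear (\<lambda>x. T (R x))"
    by (rule bounded_linear_compose[OF bounded_clinear_bounded_linear[OF t] bounded_clinear_bounded_linear[OF r]])
  then have "bounded_linear (T \<circ> R)" by (simp add: comp_def)
  then obtain K where K: "\<And>x. norm ((T \<circ> R) x) \<le> norm x * K"
    using bounded_linear.bounded by blast
  show ?thesis using t r K unfolding bounded_clinear_def comp_def by metis
qed

lemma bcl_id: "bounded_clinear id"
  unfolding bounded_clinear_def by (auto intro!: exI[of _ 1])

lemma bcl_pow: "bounded_clinear T \<Longrightarrow> bounded_clinear (T ^^ k)"
  by (induction k) (auto simp: bcl_id bcl_comp)


lemma Re_polar: "Re (cinner u (v::'a::complex_inner)) = (norm (u + v) ^ 2 - norm (u - v) ^ 2) / 4"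
  by (simp add: norm_add_sq norm_diff_sq)

lemma Im_polar: "Im (cinner u (v::'a::complex_inner)) = - ((norm (u + \<i> *\<^sub>C v) ^ 2 - norm (u - \<i> *\<^sub>C v) ^ 2) / 4)"
proof -
  have "Re (cinner u (\<i> *\<^sub>C v)) = - Im (cinner u v)" by (simp add: cinner_scaleC_right)
  then show ?thesis using Re_polar[of u "\<i> *\<^sub>C v"] by simp
qed

lemma cinner_polar: "cinner u (v::'a::complex_inner) =
   Complex ((norm (u + v) ^ 2 - norm (u - v) ^ 2) / 4)
    (- ((norm (u + \<i> *\<^sub>C v) ^ 2 - norm (u - \<i> *\<^sub>C v) ^ 2) / 4))"
  by (rule complex_eqI) (simp_all only: Re_polar Im_polar complex.sel)

lemma tendsto_scaleC: "(f \<longlongrightarrow> l) F \<Longrightarrow> ((\<lambda>x. a *\<^sub>C f x) \<longlongrightarrow> a *\<^sub>C (l::'a::complex_inner)) F"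
  using bounded_linear.tendsto[OF bounded_clinear_bounded_linear[OF bounded_clinear_scaleC]] by blast

lemma tendsto_cinner_right:
  assumes "(f \<longlongrightarrow> (l::'a::complex_inner)) F"
  shows "((\<lambda>x. cinner u (f x)) \<longlongrightarrow> cinner u l) F"
  unfolding cinner_polar[of u]
  by (intro tendsto_Complex tendsto_divide tendsto_diff tendsto_power tendsto_norm tendsto_add
        tendsto_const assms tendsto_scaleC tendsto_minus) simp_all

lemma continuous_on_cinner_right: "continuous_on S (\<lambda>v. cinner u (v::'a::complex_inner))"
  unfolding continuous_on_def by (auto intro!: tendsto_cinner_right tendsto_ident_at)

lemma closed_orth: "closed {v::'a::complex_inner. cinner u v = 0}"
  using closed_Collect_eq[of "\<lambda>v. cinner u v" "\<lambda>v. 0"]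
  by (simp add: continuous_on_cinner_right)

lemma closed_orth_left: "closed {v::'a::complex_inner. cinner v u = 0}"
proof -
  have "{v. cinner v u = 0} = {v. cinner u v = 0}"
    by (metis cinner_commute complex_cnj_zero_iff)
  then show ?thesis using closed_orth by metis
qed

lemma csubspace_0: "csubspace S \<Longrightarrow> 0 \<in> S" by (simp add: csubspace_def)
lemma csubspace_add: "csubspace S \<Longrightarrow> x \<in> S \<Longrightarrow> y \<in> S \<Longrightarrow> x + y \<in> S" by (simp add: csubspace_def)
lemma csubspace_scaleC: "csubspace S \<Longrightarrow> x \<in> S \<Longrightarrow> a *\<^sub>C x \<in> S" by (simp add: csubspace_def)
lemma csubspace_diff: "csubspace S \<Longrightarrow> x \<in> S \<Longrightarrow> y \<in> S \<Longrightarrow> x - y \<in> S"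
  using csubspace_add[of S x "(-1) *\<^sub>C y"] csubspace_scaleC[of S y "-1"] by (simp add: scaleC_minus1)
lemma csubspace_sum: "csubspace S \<Longrightarrow> (\<And>i. i \<in> F \<Longrightarrow> f i \<in> S) \<Longrightarrow> sum f F \<in> S"
  by (induction F rule: infinite_finite_induct) (auto simp: csubspace_0 csubspace_add)

lemma csubspace_Inter: "(\<And>T. T \<in> \<T> \<Longrightarrow> csubspace T) \<Longrightarrow> csubspace (\<Inter>\<T>)"
  by (simp add: csubspace_def)

lemma csubspace_INT: "(\<And>i. i \<in> I \<Longrightarrow> csubspace (T i)) \<Longrightarrow> csubspace (\<Inter>i\<in>I. T i)"
  by (simp add: csubspace_def)

lemma csubspace_Int: "csubspace S \<Longrightarrow> csubspace T \<Longrightarrow> csubspace (S \<inter> T)"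
  by (simp add: csubspace_def)

lemma csubspace_UNIV: "csubspace UNIV" by (simp add: csubspace_def)

lemma csubspace_cspan: "csubspace (cspan S)"
  unfolding cspan_def by (rule csubspace_Inter) auto

lemma cspan_superset: "S \<subseteq> cspan S"
  unfolding cspan_def by auto

lemma cspan_minimal: "csubspace T \<Longrightarrow> S \<subseteq> T \<Longrightarrow> cspan S \<subseteq> T"
  unfolding cspan_def by auto

lemma csubspace_closure:
  assumes "csubspace (T::'a::complex_inner set)" shows "csubspace (closure T)"
  unfolding csubspace_def
proof (intro conjI ballI allI)
  show "0 \<in> closure T" using assms csubspace_0 closure_subset by blast
next
  fix x y assume "x \<in> closure T" "y \<in> closure T"
  then obtain f g where f: "\<forall>n. f n \<in> T" "f \<longlonglongrightarrow> x" and g: "\<forall>n. g n \<in> T" "g \<longlonglongrightarrow> y"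
    unfolding closure_sequential by blast
  have "(\<lambda>n. f n + g n) \<longlonglongrightarrow> x + y" using f g by (intro tendsto_add) auto
  moreover have "\<forall>n. f n + g n \<in> T" using f g assms csubspace_add by blast
  ultimately show "x + y \<in> closure T" unfolding closure_sequential by (intro exI[of _ "\<lambda>n. f n + g n"]) simp
next
  fix a x assume "x \<in> closure T"
  then obtain f where f: "\<forall>n. f n \<in> T" "f \<longlonglongrightarrow> x"
    unfolding closure_sequential by blast
  have "(\<lambda>n. a *\<^sub>C f n) \<longlonglongrightarrow> a *\<^sub>C x" using f by (intro tendsto_scaleC) auto
  moreover have "\<forall>n. a *\<^sub>C f n \<in> T" using f assms csubspace_scaleC by blast
  ultimately show "a *\<^sub>C x \<in> closure T" unfolding closure_sequential by (intro exI[of _ "\<lambda>n. a *\<^sub>C f n"]) simp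
qed

lemma csubspace_ccspan: "csubspace (ccspan S)"
  unfolding ccspan_def by (intro csubspace_closure csubspace_cspan)

lemma closed_ccspan: "closed (ccspan S)"
  unfolding ccspan_def by simp

lemma ccspan_superset: "S \<subseteq> ccspan S"
  unfolding ccspan_def using cspan_superset closure_subset by blast

lemma ccspan_minimal: "csubspace T \<Longrightarrow> closed T \<Longrightarrow> S \<subseteq> T \<Longrightarrow> ccspan S \<subseteq> T"
  unfolding ccspan_def by (meson closure_minimal cspan_minimal)

lemma ccspan_mono: "S \<subseteq> S' \<Longrightarrow> ccspan S \<subseteq> ccspan S'"
  by (meson ccspan_minimal ccspan_superset closed_ccspan csubspace_ccspan order_trans)

lemma ccspan_map:
  assumes "bounded_clinear R" "R ` S \<subseteq> ccspan S'"
  shows "R ` ccspan S \<subseteq> ccspan S'"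
proof -
  have "csubspace {x. R x \<in> ccspan S'}"
    unfolding csubspace_def using assms(1) csubspace_ccspan[of S']
    by (auto simp: bcl_zero bcl_add bcl_scaleC csubspace_0 csubspace_add csubspace_scaleC)
  moreover have "closed {x. R x \<in> ccspan S'}"
    using closed_vimage[OF closed_ccspan bcl_cont[OF assms(1)]] by (simp add: vimage_def)
  ultimately have "ccspan S \<subseteq> {x. R x \<in> ccspan S'}"
    using assms(2) by (intro ccspan_minimal) auto
  then show ?thesis by auto
qed

lemma closed_in_limit:
  assumes "closed T" "\<And>k. f k \<in> T" "f \<longlonglongrightarrow> l" shows "l \<in> T"
  using Lim_in_closed_set[of T f sequentially l] assms by auto

lemma orth_proj_eq:
  assumes "csubspace M" "y \<in> M" "\<forall>m\<in>M. cinner m (x - y) = 0"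
  shows "orth_proj M x = y"
  unfolding orth_proj_def
proof (rule the_equality)
  show "y \<in> M \<and> (\<forall>m\<in>M. cinner m (x - y) = 0)" using assms by auto
next
  fix y' assume a: "y' \<in> M \<and> (\<forall>m\<in>M. cinner m (x - y') = 0)"
  then have d: "y' - y \<in> M" using assms csubspace_diff by blast
  have "cinner (y' - y) (y' - y) = cinner (y' - y) (x - y) - cinner (y' - y) (x - y')"
    by (simp add: cinner_diff_right)
  also have "\<dots> = 0" using a assms d by simp
  finally show "y' = y" by simp
qed


locale iso =
  fixes S Ss :: "'a::chilbert_space \<Rightarrow> 'a"
  assumes iso: "isometry S" and adj: "is_adjoint S Ss"
begin

lemma S_bcl: "bounded_clinear S" using iso by (simp add: isometry_def)
lemma S_norm: "norm (S x) = norm x" using iso by (simp add: isometry_def)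
lemma adj1: "cinner (S x) y = cinner x (Ss y)" using adj by (simp add: is_adjoint_def)
lemma adj2: "cinner x (S y) = cinner (Ss x) y"
  by (metis adj1 cinner_commute)

lemma S_inner: "cinner (S x) (S y) = cinner x y"
proof -
  have "S x + S y = S (x + y)" "S x - S y = S (x - y)"
       "S x + \<i> *\<^sub>C S y = S (x + \<i> *\<^sub>C y)" "S x - \<i> *\<^sub>C S y = S (x - \<i> *\<^sub>C y)"
    using S_bcl by (simp_all add: bcl_add bcl_diff bcl_scaleC)
  then show ?thesis by (simp add: cinner_polar[of "S x"] cinner_polar[of x] S_norm)
qed

lemma SsS[simp]: "Ss (S x) = x"
  by (rule cinner_ext[symmetric]) (simp add: adj1[symmetric] S_inner)

lemma Ss_bcl: "bounded_clinear Ss"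
  unfolding bounded_clinear_def
proof (intro conjI allI exI)
  fix x y show "Ss (x + y) = Ss x + Ss y"
    by (rule cinner_ext) (simp add: adj1[symmetric] cinner_add_right)
next
  fix a x show "Ss (a *\<^sub>C x) = a *\<^sub>C Ss x"
    by (rule cinner_ext) (simp add: adj1[symmetric] cinner_scaleC_right)
next
  fix y
  have "norm (Ss y) ^ 2 = Re (cinner (S (Ss y)) y)" by (simp add: adj1 cinner_self_Re)
  also have "\<dots> \<le> (norm (S (Ss y)) ^ 2 + norm y ^ 2) / 2" using re_cinner_le[of "S (Ss y)" y] by simp
  finally have "norm (Ss y) ^ 2 \<le> norm y ^ 2" by (simp add: S_norm)
  then show "norm (Ss y) \<le> norm y * 1" by (simp add: power2_le_iff_abs_le)
qed

lemma Sk_bcl: "bounded_clinear (S ^^ k)" by (rule bcl_pow[OF S_bcl])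
lemma Ssk_bcl: "bounded_clinear (Ss ^^ k)" by (rule bcl_pow[OF Ss_bcl])

lemma adjk: "cinner ((S ^^ k) x) y = cinner x ((Ss ^^ k) y)"
proof (induction k arbitrary: y)
  case (Suc k)
  have "cinner ((S ^^ Suc k) x) y = cinner ((S ^^ k) x) (Ss y)" by (simp add: adj1)
  also have "\<dots> = cinner x ((Ss ^^ k) (Ss y))" by (rule Suc)
  finally show ?case by (simp add: funpow_swap1)
qed simp

lemma SsSk[simp]: "(Ss ^^ k) ((S ^^ k) x) = x"
proof (induction k arbitrary: x)
  case (Suc k)
  have "(Ss ^^ Suc k) ((S ^^ Suc k) x) = (Ss ^^ k) (Ss (S ((S ^^ k) x)))"
    by (simp add: funpow_swap1)
  then show ?case using Suc by simp
qed simp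

lemma Sk_inner: "cinner ((S ^^ k) x) ((S ^^ k) y) = cinner x y"
  by (simp add: adjk)

definition Q :: "nat \<Rightarrow> 'a \<Rightarrow> 'a" where "Q k x = (S ^^ k) ((Ss ^^ k) x)"

lemma range_eq: "range (S ^^ k) = {y. Q k y = y}"
  unfolding Q_def by (auto, metis rangeI)

lemma range_closed: "closed (range (S ^^ k))"
proof -
  have "continuous_on UNIV (Q k)" unfolding Q_def
    using bcl_cont[OF bcl_comp[OF Sk_bcl Ssk_bcl]] by (simp add: comp_def)
  then show ?thesis unfolding range_eq
    using closed_Collect_eq[of "Q k" "\<lambda>y. y"] by (simp add: continuous_on_id)
qed

lemma range_mono: "k \<le> m \<Longrightarrow> (S ^^ m) x \<in> range (S ^^ k)"
proof -
  assume "k \<le> m"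
  then have "(S ^^ m) x = (S ^^ k) ((S ^^ (m - k)) x)"
    by (metis funpow_add le_add_diff_inverse comp_apply)
  then show ?thesis by simp
qed

lemma Q_in: "k \<le> m \<Longrightarrow> Q m x \<in> range (S ^^ k)"
  unfolding Q_def by (rule range_mono)

lemma Q_orth: "u \<in> range (S ^^ k) \<Longrightarrow> cinner u (x - Q k x) = 0"
  unfolding Q_def by (auto simp: cinner_diff_right adjk)

lemma Q_decomp:
  assumes "k \<le> m"
  shows "norm (Q k x) ^ 2 = norm (Q m x) ^ 2 + norm (Q k x - Q m x) ^ 2"
proof -
  have "cinner (Q m x) (Q k x - Q m x) = cinner (Q m x) (x - Q m x) - cinner (Q m x) (x - Q k x)"
    by (simp add: cinner_diff_right)
  also have "\<dots> = 0" using Q_orth Q_in assms by (metis order_refl diff_self)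
  finally have "cinner (Q m x) (Q k x - Q m x) = 0" .
  from pythag[OF this] show ?thesis by simp
qed

lemma Q_Cauchy: "Cauchy (\<lambda>k. Q k x)"
proof -
  define f where "f k = norm (Q k x) ^ 2" for k
  have dec: "f m \<le> f k" if "k \<le> m" for k m using Q_decomp[OF that] unfolding f_def by simp
  have "decseq f" using dec by (simp add: decseq_def)
  moreover have "Bseq f"
  proof -
    have "\<forall>k. norm (f k) \<le> f 0" using dec unfolding f_def by (auto simp: abs_le_iff)
    then show ?thesis by (intro BseqI'[of _ "f 0"]) auto
  qed
  ultimately have "convergent f" by (simp add: Bseq_monoseq_convergent decseq_imp_monoseq)
  then have cf: "Cauchy f" by (simp add: convergent_Cauchy)
  show ?thesis
    unfolding Cauchy_def
  proof (intro allI impI)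
    fix e :: real assume "e > 0"
    then have "e ^ 2 > 0" by simp
    with cf obtain M where M: "\<forall>m\<ge>M. \<forall>n\<ge>M. dist (f m) (f n) < e ^ 2"
      unfolding Cauchy_def by blast
    have "dist (Q m x) (Q n x) < e" if "m \<ge> M" "n \<ge> M" for m n
    proof -
      have *: "norm (Q k x - Q l x) ^ 2 < e ^ 2" if "k \<ge> M" "l \<ge> M" "k \<le> l" for k l
      proof -
        have a: "\<bar>norm (Q k x) ^ 2 - norm (Q l x) ^ 2\<bar> < e ^ 2"
          using M that unfolding f_def dist_real_def by blast
        then show ?thesis using Q_decomp[OF that(3), of x] by simp
      qed
      have "norm (Q m x - Q n x) ^ 2 < e ^ 2"
        using *[of m n] *[of n m] that by (metis linear norm_minus_commute)
      then show ?thesis using \<open>e > 0\<close> by (simp add: dist_norm power_less_imp_less_base)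
    qed
    then show "\<exists>M. \<forall>m\<ge>M. \<forall>n\<ge>M. dist (Q m x) (Q n x) < e" by blast
  qed
qed

definition PU :: "'a \<Rightarrow> 'a" where "PU x = lim (\<lambda>k. Q k x)"

lemma Q_lim: "(\<lambda>k. Q k x) \<longlonglongrightarrow> PU x"
  unfolding PU_def using Q_Cauchy Cauchy_convergent convergent_LIMSEQ_iff by blast

lemma H_uni_closed: "closed (H_uni S)"
  unfolding H_uni_def using range_closed by blast

lemma H_uni_sub: "csubspace (H_uni S)"
  unfolding H_uni_def
proof (rule csubspace_INT)
  fix k
  have b: "bounded_clinear (S ^^ k)" by (rule Sk_bcl)
  show "csubspace (range (S ^^ k))" unfolding csubspace_def
  proof (intro conjI ballI allI)
    show "0 \<in> range (S ^^ k)" using bcl_zero[OF b] by (metis rangeI)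
  next
    fix x y assume "x \<in> range (S ^^ k)" "y \<in> range (S ^^ k)"
    then obtain a c where "x = (S ^^ k) a" "y = (S ^^ k) c" by blast
    then have "x + y = (S ^^ k) (a + c)" using bcl_add[OF b] by simp
    then show "x + y \<in> range (S ^^ k)" by simp
  next
    fix a x assume "x \<in> range (S ^^ k)"
    then obtain c where "x = (S ^^ k) c" by blast
    then have "a *\<^sub>C x = (S ^^ k) (a *\<^sub>C c)" using bcl_scaleC[OF b] by simp
    then show "a *\<^sub>C x \<in> range (S ^^ k)" by simp
  qed
qed

lemma PU_uni: "PU x \<in> H_uni S"
  unfolding H_uni_def
proof
  fix k
  show "PU x \<in> range (S ^^ k)"
  proof (rule Lim_in_closed_set[OF range_closed[of k] _ _ Q_lim])
    show "\<forall>\<^sub>F m in sequentially. Q m x \<in> range (S ^^ k)"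
      unfolding eventually_sequentially using Q_in by blast
  qed simp
qed

lemma PU_orth: "u \<in> H_uni S \<Longrightarrow> cinner u (x - PU x) = 0"
proof -
  assume u: "u \<in> H_uni S"
  have "(\<lambda>k. cinner u (x - Q k x)) \<longlonglongrightarrow> cinner u (x - PU x)"
    by (intro tendsto_cinner_right tendsto_diff tendsto_const Q_lim)
  moreover have "\<And>k. cinner u (x - Q k x) = 0" using u Q_orth unfolding H_uni_def by blast
  ultimately have "(\<lambda>k. 0) \<longlonglongrightarrow> cinner u (x - PU x)" by simp
  from LIMSEQ_unique[OF tendsto_const this] show ?thesis by simp
qed

definition E :: "'a \<Rightarrow> 'a" where "E y = y - S (Ss y)"

lemma E_ker: "E y \<in> ker Ss"
  unfolding E_def ker_def using Ss_bcl by (simp add: bcl_diff)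

lemma Q_sum: "x - Q K x = (\<Sum>k<K. (S ^^ k) (E ((Ss ^^ k) x)))"
proof (induction K)
  case 0 then show ?case by (simp add: Q_def)
next
  case (Suc K)
  have "Q (Suc K) x = (S ^^ K) (S (Ss ((Ss ^^ K) x)))"
    unfolding Q_def by (simp add: funpow_swap1)
  then have "Q K x - Q (Suc K) x = (S ^^ K) (E ((Ss ^^ K) x))"
    unfolding Q_def E_def using Sk_bcl by (simp add: bcl_diff)
  then have "x - Q (Suc K) x = (x - Q K x) + (S ^^ K) (E ((Ss ^^ K) x))" by (simp add: algebra_simps)
  then show ?case using Suc by simp
qed

lemma H_iso_sub: "csubspace (H_iso S Ss)" unfolding H_iso_def by (rule csubspace_ccspan)
lemma H_iso_closed: "closed (H_iso S Ss)" unfolding H_iso_def by (rule closed_ccspan)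

lemma gen_iso: "w \<in> ker Ss \<Longrightarrow> (S ^^ k) w \<in> H_iso S Ss"
proof -
  assume "w \<in> ker Ss"
  then have "(S ^^ k) w \<in> (\<Union>k. (S ^^ k) ` ker Ss)" by (intro UN_I[where a=k] UNIV_I imageI)
  then show ?thesis unfolding H_iso_def by (rule subsetD[OF ccspan_superset])
qed

lemma iso_part: "x - PU x \<in> H_iso S Ss"
proof -
  have "x - Q K x \<in> H_iso S Ss" for K
    unfolding Q_sum by (rule csubspace_sum[OF H_iso_sub gen_iso[OF E_ker]])
  then show ?thesis by (rule closed_in_limit[OF H_iso_closed _ tendsto_diff[OF tendsto_const Q_lim]])
qed

lemma uni_orth_iso:
  assumes p: "p \<in> H_uni S" and u: "u \<in> H_iso S Ss"
  shows "cinner u p = 0"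
proof -
  have "H_iso S Ss \<subseteq> {u. cinner u p = 0}"
    unfolding H_iso_def
  proof (rule ccspan_minimal)
    show "csubspace {u. cinner u p = 0}"
      unfolding csubspace_def by (auto simp: cinner_add_left cinner_scaleC_left)
    show "closed {u. cinner u p = 0}" by (rule closed_orth_left)
    show "(\<Union>k. (S ^^ k) ` ker Ss) \<subseteq> {u. cinner u p = 0}"
    proof clarify
      fix k w assume "w \<in> ker Ss"
      from p obtain q where q: "p = (S ^^ Suc k) q" unfolding H_uni_def by blast
      have "cinner ((S ^^ k) w) p = cinner ((S ^^ k) w) ((S ^^ k) (S q))"
        by (simp add: q funpow_swap1)
      also have "\<dots> = cinner (Ss w) q" by (simp add: Sk_inner adj2)
      also have "\<dots> = 0" using \<open>w \<in> ker Ss\<close> by (simp add: ker_def)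
      finally show "cinner ((S ^^ k) w) p = 0" .
    qed
  qed
  then show ?thesis using u by blast
qed

lemma proj_uni: "orth_proj (H_uni S) x = PU x"
  by (rule orth_proj_eq[OF H_uni_sub PU_uni]) (simp add: PU_orth)

lemma proj_iso: "orth_proj (H_iso S Ss) x = x - PU x"
  by (rule orth_proj_eq[OF H_iso_sub iso_part]) (simp add: uni_orth_iso[OF PU_uni])

lemma iso_PU0: "x \<in> H_iso S Ss \<Longrightarrow> PU x = 0"
proof -
  assume x: "x \<in> H_iso S Ss"
  have "cinner (PU x) x = 0"
    by (metis cinner_commute complex_cnj_zero uni_orth_iso[OF PU_uni x])
  moreover have "cinner (PU x) (x - PU x) = 0" by (rule PU_orth[OF PU_uni])
  ultimately have "cinner (PU x) (PU x) = 0" by (simp add: cinner_diff_right)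
  then show ?thesis by simp
qed

lemma reduce:
  assumes M: "closed M" "csubspace M" "\<And>y. y \<in> M \<Longrightarrow> S y \<in> M" "\<And>y. y \<in> M \<Longrightarrow> Ss y \<in> M"
    and x: "x \<in> M"
  shows "PU x \<in> M" "x - PU x \<in> M"
proof -
  have Sk: "(S ^^ k) y \<in> M" "(Ss ^^ k) y \<in> M" if "y \<in> M" for k y
    using that by (induction k) (auto simp: M)
  have "Q k x \<in> M" for k unfolding Q_def using Sk x by blast
  then show "PU x \<in> M" using closed_in_limit[OF M(1) _ Q_lim] by blast
  then show "x - PU x \<in> M" using csubspace_diff[OF M(2) x] by blast
qed

lemma Q_tends_iso: "x \<in> H_iso S Ss \<Longrightarrow> (\<lambda>K. \<Sum>k<K. (S ^^ k) (E ((Ss ^^ k) x))) \<longlonglongrightarrow> x"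
  using tendsto_diff[OF tendsto_const[of x] Q_lim[of x]] iso_PU0 by (simp add: Q_sum[symmetric])

end


definition qc :: "('a::complex_inner \<Rightarrow> 'a) \<Rightarrow> ('a \<Rightarrow> 'a) \<Rightarrow> bool" where
  "qc T R \<longleftrightarrow> (\<exists>c. c \<noteq> 0 \<and> (\<forall>x. T (R x) = c *\<^sub>C R (T x)))"

lemma qcI: "c \<noteq> 0 \<Longrightarrow> (\<And>x. T (R x) = c *\<^sub>C R (T x)) \<Longrightarrow> qc T R"
  unfolding qc_def by blast

lemma qc_sym: assumes "qc T R" shows "qc R T"
proof -
  obtain c where c: "c \<noteq> 0" "\<And>x. T (R x) = c *\<^sub>C R (T x)" using assms unfolding qc_def by blast
  have "R (T x) = inverse c *\<^sub>C T (R x)" for x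
    using c by (simp add: scaleC_scaleC scaleC_one)
  then show ?thesis using c by (intro qcI[of "inverse c"]) auto
qed

lemma qc_pow_right: assumes "qc T R" "bounded_clinear R" shows "qc T (R ^^ m)"
proof -
  obtain c where c: "c \<noteq> 0" "\<And>x. T (R x) = c *\<^sub>C R (T x)" using assms unfolding qc_def by blast
  have "T ((R ^^ m) x) = (c ^ m) *\<^sub>C (R ^^ m) (T x)" for x
  proof (induction m)
    case 0 then show ?case by (simp add: scaleC_one)
  next
    case (Suc m)
    have "T ((R ^^ Suc m) x) = c *\<^sub>C R (T ((R ^^ m) x))" by (simp add: c)
    also have "\<dots> = c *\<^sub>C R ((c ^ m) *\<^sub>C (R ^^ m) (T x))" by (simp only: Suc)
    also have "\<dots> = (c ^ Suc m) *\<^sub>C (R ^^ Suc m) (T x)"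
      by (simp add: bcl_scaleC[OF assms(2)] scaleC_scaleC)
    finally show ?case .
  qed
  then show ?thesis using c by (intro qcI[of "c ^ m"]) auto
qed

lemma qc_pow_left: "qc T R \<Longrightarrow> bounded_clinear T \<Longrightarrow> qc (T ^^ m) R"
  using qc_pow_right qc_sym by blast

lemma ker_pres: assumes "qc T R" "bounded_clinear R" "x \<in> ker T" shows "R x \<in> ker T"
proof -
  obtain c where c: "\<And>x. T (R x) = c *\<^sub>C R (T x)" using assms unfolding qc_def by blast
  show ?thesis using assms(3) c[of x] bcl_zero[OF assms(2)] by (simp add: ker_def)
qed

lemma range_pres: assumes "qc R T" "bounded_clinear T" shows "R ((T ^^ k) y) \<in> range (T ^^ k)"
proof -
  obtain d where d: "\<And>x. R ((T ^^ k) x) = d *\<^sub>C (T ^^ k) (R x)"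
    using qc_pow_right[OF assms] unfolding qc_def by blast
  have "R ((T ^^ k) y) = (T ^^ k) (d *\<^sub>C R y)" using d bcl_scaleC[OF bcl_pow[OF assms(2)]] by simp
  then show ?thesis by simp
qed

lemma uni_pres: assumes "qc R T" "bounded_clinear T" "x \<in> H_uni T" shows "R x \<in> H_uni T"
  unfolding H_uni_def
proof
  fix k
  from assms(3) obtain y where "x = (T ^^ k) y" unfolding H_uni_def by blast
  then show "R x \<in> range (T ^^ k)" using range_pres[OF assms(1,2)] by simp
qed

lemma gen_iso': "w \<in> ker Ts \<Longrightarrow> (T ^^ k) w \<in> H_iso T Ts"
proof -
  assume "w \<in> ker Ts"
  then have "(T ^^ k) w \<in> (\<Union>k. (T ^^ k) ` ker Ts)" by (intro UN_I[where a=k] UNIV_I imageI)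
  then show ?thesis unfolding H_iso_def by (rule subsetD[OF ccspan_superset])
qed

lemma iso_pres:
  assumes "qc R T" "qc Ts R" "bounded_clinear R" "bounded_clinear T" "bounded_clinear Ts"
    and "x \<in> H_iso T Ts"
  shows "R x \<in> H_iso T Ts"
proof -
  have "R ` (\<Union>k. (T ^^ k) ` ker Ts) \<subseteq> ccspan (\<Union>k. (T ^^ k) ` ker Ts)"
  proof clarify
    fix k w assume w: "w \<in> ker Ts"
    obtain d where d: "\<And>x. R ((T ^^ k) x) = d *\<^sub>C (T ^^ k) (R x)"
      using qc_pow_right[OF assms(1,4)] unfolding qc_def by blast
    have "R ((T ^^ k) w) = (T ^^ k) (d *\<^sub>C R w)" using d bcl_scaleC[OF bcl_pow[OF assms(4)]] by simp
    moreover have "d *\<^sub>C R w \<in> ker Ts"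
      using ker_pres[OF assms(2,3) w] bcl_scaleC[OF assms(5)] by (simp add: ker_def)
    ultimately show "R ((T ^^ k) w) \<in> ccspan (\<Union>k. (T ^^ k) ` ker Ts)"
      using gen_iso'[where w="d *\<^sub>C R w" and Ts=Ts and T=T and k=k] unfolding H_iso_def by simp
  qed
  from ccspan_map[OF assms(3) this] assms(6) show ?thesis unfolding H_iso_def by blast
qed

lemma orth_proj_id: "csubspace M \<Longrightarrow> y \<in> M \<Longrightarrow> orth_proj M y = y"
  by (rule orth_proj_eq) auto

lemma scaleC_inv: "c \<noteq> 0 \<Longrightarrow> inverse c *\<^sub>C (c *\<^sub>C (x::'a::complex_inner)) = x"
  by (simp add: scaleC_scaleC scaleC_one)

lemma vmon_Nil[simp]: "vmon V [] k = id" by (simp add: vmon_def)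
lemma vmon_Cons: "vmon V (i # l) k = (V i ^^ k i) \<circ> vmon V l k" by (simp add: vmon_def)
lemma vmon_Cons_app: "vmon V (i # l) k x = (V i ^^ k i) (vmon V l k x)" by (simp add: vmon_def)
lemma vmon_cong: "(\<And>i. i \<in> set l \<Longrightarrow> k i = k' i) \<Longrightarrow> vmon V l k = vmon V l k'"
  by (induction l) (auto simp: vmon_Cons)

locale dnc =
  fixes n :: nat and z :: "nat \<Rightarrow> nat \<Rightarrow> complex" and V Vs :: "nat \<Rightarrow> 'a::chilbert_space \<Rightarrow> 'a"
  assumes dnc: "doubly_noncommuting n z V Vs"
begin

lemma isoV: "i \<in> {1..n} \<Longrightarrow> iso (V i) (Vs i)"
  using dnc unfolding doubly_noncommuting_def by (intro iso.intro) auto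

lemma bclV: "i \<in> {1..n} \<Longrightarrow> bounded_clinear (V i)" using iso.S_bcl[OF isoV] .
lemma bclVs: "i \<in> {1..n} \<Longrightarrow> bounded_clinear (Vs i)" using iso.Ss_bcl[OF isoV] .
lemma VsV: "i \<in> {1..n} \<Longrightarrow> Vs i (V i x) = x" using iso.SsS[OF isoV] .

lemma dnc2: assumes "i \<in> {1..n}" "j \<in> {1..n}" "i \<noteq> j"
  shows "norm (z i j) = 1 \<and> z j i = cnj (z i j) \<and> (\<forall>x. Vs i (V j x) = cnj (z i j) *\<^sub>C V j (Vs i x))"
proof -
  have d: "\<forall>i\<in>{1..n}. \<forall>j\<in>{1..n}. i \<noteq> j \<longrightarrow> norm (z i j) = 1 \<and> z j i = cnj (z i j) \<and>
        (\<forall>x. Vs i (V j x) = cnj (z i j) *\<^sub>C V j (Vs i x))"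
    using dnc unfolding doubly_noncommuting_def by (rule conjunct2)
  show ?thesis using bspec[OF bspec[OF d assms(1)] assms(2)] assms(3) by (rule mp)
qed

lemma zprops: assumes "i \<in> {1..n}" "j \<in> {1..n}" "i \<noteq> j"
  shows "z i j * cnj (z i j) = 1" "cnj (z i j) * z i j = 1" "z i j \<noteq> 0" "cnj (z i j) \<noteq> 0" "z j i = cnj (z i j)"
proof -
  have m: "cmod (z i j) = 1" "z j i = cnj (z i j)"
    using conjunct1[OF dnc2[OF assms]] conjunct1[OF conjunct2[OF dnc2[OF assms]]] by simp_all
  have "z i j * cnj (z i j) = complex_of_real ((cmod (z i j))^2)" by (rule sym[OF complex_norm_square])
  also have "\<dots> = 1" by (simp only: m(1) power_one of_real_1)
  finally show zz: "z i j * cnj (z i j) = 1" .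
  then show "cnj (z i j) * z i j = 1" by (simp only: mult.commute)
  show nz: "z i j \<noteq> 0" using m(1) by (metis norm_zero zero_neq_one)
  then show "cnj (z i j) \<noteq> 0" by (simp only: complex_cnj_zero_iff not_False_eq_True)
  show "z j i = cnj (z i j)" by (rule m(2))
qed

lemma C1: "i \<in> {1..n} \<Longrightarrow> j \<in> {1..n} \<Longrightarrow> i \<noteq> j \<Longrightarrow> Vs i (V j x) = cnj (z i j) *\<^sub>C V j (Vs i x)"
  using dnc2 by blast

lemma C2: assumes ij: "i \<in> {1..n}" "j \<in> {1..n}" "i \<noteq> j"
  shows "V j (V i x) = cnj (z i j) *\<^sub>C V i (V j x)"
proof -
  define c where "c = cnj (z i j)"
  define X where "X = V j (V i x) - c *\<^sub>C V i (V j x)"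
  have "Vs i X = Vs i (V j (V i x)) - c *\<^sub>C Vs i (V i (V j x))"
    unfolding X_def using bclVs[OF ij(1)] by (simp add: bcl_diff bcl_scaleC)
  also have "\<dots> = 0" using C1[OF ij] VsV[OF ij(1)] unfolding c_def by simp
  finally have Xi: "Vs i X = 0" .
  have "Vs j X = Vs j (V j (V i x)) - c *\<^sub>C Vs j (V i (V j x))"
    unfolding X_def using bclVs[OF ij(2)] by (simp add: bcl_diff bcl_scaleC)
  also have "\<dots> = V i x - (c * cnj (z j i)) *\<^sub>C V i x"
    using C1[OF ij(2,1) ij(3)[symmetric]] VsV[OF ij(2)] by (simp add: scaleC_scaleC)
  also have "\<dots> = 0" using zprops[OF ij] unfolding c_def by (simp add: scaleC_one)
  finally have Xj: "Vs j X = 0" .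
  have "cinner X X = cinner (V j (V i x)) X - cinner (c *\<^sub>C V i (V j x)) X"
    unfolding X_def by (simp add: cinner_diff_left)
  also have "\<dots> = 0"
    using Xi Xj iso.adj1[OF isoV[OF ij(2)]] iso.adj1[OF isoV[OF ij(1)]] by (simp add: cinner_scaleC_left)
  finally have "X = 0" by simp
  then show ?thesis unfolding X_def c_def by simp
qed

lemma C3: assumes ij: "i \<in> {1..n}" "j \<in> {1..n}" "i \<noteq> j"
  shows "Vs i (Vs j x) = z i j *\<^sub>C Vs j (Vs i x)"
proof (rule cinner_ext)
  fix y
  have "cinner y (Vs i (Vs j x)) = cinner (V j (V i y)) x"
    by (simp add: iso.adj1[OF isoV[OF ij(1)]] iso.adj1[OF isoV[OF ij(2)]])
  also have "\<dots> = z i j * cinner (V i (V j y)) x"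
    by (simp add: C2[OF ij] cinner_scaleC_left)
  also have "\<dots> = cinner y (z i j *\<^sub>C Vs j (Vs i x))"
    by (simp add: iso.adj1[OF isoV[OF ij(1)]] iso.adj1[OF isoV[OF ij(2)]] cinner_scaleC_right)
  finally show "cinner y (Vs i (Vs j x)) = cinner y (z i j *\<^sub>C Vs j (Vs i x))" .
qed

lemma qc_all:
  assumes ij: "i \<in> {1..n}" "j \<in> {1..n}" "i \<noteq> j"
  shows "qc (V i) (V j)" "qc (Vs i) (V j)" "qc (Vs i) (Vs j)" "qc (V i) (Vs j)"
proof -
  show "qc (V i) (V j)" using C2[OF ij(2,1) ij(3)[symmetric]] zprops[OF ij(2,1) ij(3)[symmetric]]
    by (intro qcI) auto
  show "qc (Vs i) (V j)" using C1[OF ij] zprops[OF ij] by (intro qcI) auto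
  show "qc (Vs i) (Vs j)" using C3[OF ij] zprops[OF ij] by (intro qcI) auto
  have "qc (Vs j) (V i)" using C1[OF ij(2,1) ij(3)[symmetric]] zprops[OF ij(2,1) ij(3)[symmetric]]
    by (intro qcI) auto
  then show "qc (V i) (Vs j)" by (rule qc_sym)
qed

end


lemma pres_pow: "(\<And>y. y \<in> M \<Longrightarrow> R y \<in> M) \<Longrightarrow> y \<in> M \<Longrightarrow> (R ^^ k) y \<in> M"
  by (induction k) auto

context dnc
begin

lemma iso_self: "a \<in> {1..n} \<Longrightarrow> y \<in> H_iso (V a) (Vs a) \<Longrightarrow> V a y \<in> H_iso (V a) (Vs a)"
proof -
  assume a: "a \<in> {1..n}" and y: "y \<in> H_iso (V a) (Vs a)"
  have "V a ` (\<Union>k. (V a ^^ k) ` ker (Vs a)) \<subseteq> ccspan (\<Union>k. (V a ^^ k) ` ker (Vs a))"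
  proof clarify
    fix k w assume "w \<in> ker (Vs a)"
    then have "(V a ^^ Suc k) w \<in> H_iso (V a) (Vs a)" by (rule gen_iso')
    then show "V a ((V a ^^ k) w) \<in> ccspan (\<Union>k. (V a ^^ k) ` ker (Vs a))" unfolding H_iso_def by simp
  qed
  from ccspan_map[OF bclV[OF a] this] y show ?thesis unfolding H_iso_def by blast
qed

lemma uni_self: assumes a: "a \<in> {1..n}" and y: "y \<in> H_uni (V a)"
  shows "V a y \<in> H_uni (V a)" "Vs a y \<in> H_uni (V a)"
proof -
  show "V a y \<in> H_uni (V a)" unfolding H_uni_def
  proof
    fix k
    from y obtain t where "y = (V a ^^ k) t" unfolding H_uni_def by blast
    then have "V a y = (V a ^^ k) (V a t)" by (simp add: funpow_swap1)
    then show "V a y \<in> range (V a ^^ k)" by simp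
  qed
  show "Vs a y \<in> H_uni (V a)" unfolding H_uni_def
  proof
    fix k
    from y obtain t where "y = (V a ^^ Suc k) t" unfolding H_uni_def by blast
    then have "Vs a y = (V a ^^ k) t" using VsV[OF a] by simp
    then show "Vs a y \<in> range (V a ^^ k)" by simp
  qed
qed

lemma pres_iso: assumes "a \<in> {1..n}" "i \<in> {1..n}" "i \<noteq> a" "y \<in> H_iso (V i) (Vs i)"
  shows "V a y \<in> H_iso (V i) (Vs i)" "Vs a y \<in> H_iso (V i) (Vs i)"
proof -
  have ai: "a \<noteq> i" using assms(3) by simp
  show "V a y \<in> H_iso (V i) (Vs i)"
    by (rule iso_pres[OF qc_all(1)[OF assms(1,2) ai] qc_all(2)[OF assms(2,1) assms(3)]
          bclV[OF assms(1)] bclV[OF assms(2)] bclVs[OF assms(2)] assms(4)])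
  show "Vs a y \<in> H_iso (V i) (Vs i)"
    by (rule iso_pres[OF qc_all(2)[OF assms(1,2) ai] qc_all(3)[OF assms(2,1) assms(3)]
          bclVs[OF assms(1)] bclV[OF assms(2)] bclVs[OF assms(2)] assms(4)])
qed

lemma pres_uni: assumes "a \<in> {1..n}" "i \<in> {1..n}" "i \<noteq> a" "y \<in> H_uni (V i)"
  shows "V a y \<in> H_uni (V i)" "Vs a y \<in> H_uni (V i)"
proof -
  have ai: "a \<noteq> i" using assms(3) by simp
  show "V a y \<in> H_uni (V i)" by (rule uni_pres[OF qc_all(1)[OF assms(1,2) ai] bclV[OF assms(2)] assms(4)])
  show "Vs a y \<in> H_uni (V i)" by (rule uni_pres[OF qc_all(2)[OF assms(1,2) ai] bclV[OF assms(2)] assms(4)])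
qed

lemma pres_ker: assumes "a \<in> {1..n}" "i \<in> {1..n}" "i \<noteq> a" "y \<in> ker (Vs i)"
  shows "V a y \<in> ker (Vs i)" "Vs a y \<in> ker (Vs i)"
proof -
  show "V a y \<in> ker (Vs i)" by (rule ker_pres[OF qc_all(2)[OF assms(2,1,3)] bclV[OF assms(1)] assms(4)])
  show "Vs a y \<in> ker (Vs i)" by (rule ker_pres[OF qc_all(3)[OF assms(2,1,3)] bclVs[OF assms(1)] assms(4)])
qed

lemma ker_sub: "i \<in> {1..n} \<Longrightarrow> csubspace (ker (Vs i))"
  unfolding csubspace_def ker_def using bclVs
  by (simp add: bcl_zero bcl_add bcl_scaleC)

lemma vmon_bcl: "set l \<subseteq> {1..n} \<Longrightarrow> bounded_clinear (vmon V l k)"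
proof (induction l)
  case Nil then show ?case by (simp only: vmon_Nil bcl_id)
next
  case (Cons a l) then show ?case
    unfolding vmon_Cons by (intro bcl_comp bcl_pow bclV) auto
qed

lemma vmon_pres: "(\<And>j y. j \<in> set l \<Longrightarrow> y \<in> M \<Longrightarrow> V j y \<in> M) \<Longrightarrow> y \<in> M \<Longrightarrow> vmon V l k y \<in> M"
proof (induction l)
  case Nil then show ?case by simp
next
  case (Cons a l)
  have u: "vmon V l k y \<in> M" using Cons by simp
  have h: "\<And>y. y \<in> M \<Longrightarrow> V a y \<in> M" using Cons.prems(1) by simp
  show ?case unfolding vmon_Cons_app by (rule pres_pow[OF h u])
qed

lemma vmon_zero: "vmon V l (\<lambda>_. 0) = id"
  by (induction l) (simp_all add: vmon_Cons)

lemma vmon_single: "distinct l \<Longrightarrow> j \<in> set l \<Longrightarrow> vmon V l ((\<lambda>_. 0)(j := k)) = V j ^^ k"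
proof (induction l)
  case Nil then show ?case by simp
next
  case (Cons a l)
  show ?case
  proof (cases "a = j")
    case True
    then have "j \<notin> set l" using Cons by simp
    then have "vmon V l ((\<lambda>_. 0)(j := k)) = vmon V l (\<lambda>_. 0)" by (intro vmon_cong) auto
    then have e: "vmon V l ((\<lambda>_. 0)(j := k)) = id" by (simp only: vmon_zero)
    show ?thesis using True by (simp only: vmon_Cons e fun_upd_same comp_id)
  next
    case False
    then show ?thesis using Cons by (simp add: vmon_Cons)
  qed
qed

lemma vmon_ker: "set l \<subseteq> {1..n} \<Longrightarrow> i \<in> {1..n} \<Longrightarrow> k i = 0 \<Longrightarrow> w \<in> ker (Vs i) \<Longrightarrow> vmon V l k w \<in> ker (Vs i)"
proof (induction l)
  case Nil then show ?case by simp
next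
  case (Cons j l)
  have u: "vmon V l k w \<in> ker (Vs i)" using Cons by simp
  show ?case
  proof (cases "j = i")
    case True then show ?thesis using u Cons.prems by (simp add: vmon_Cons)
  next
    case False
    have "j \<in> {1..n}" using Cons.prems by simp
    then show ?thesis unfolding vmon_Cons_app
      by (rule pres_pow[OF pres_ker(1)[OF _ Cons.prems(2) False[symmetric]] u])
  qed
qed

lemma pull:
  assumes "distinct l" "set l \<subseteq> {1..n}" "i \<in> set l"
  shows "\<exists>c. c \<noteq> 0 \<and> vmon V l (k(i := m)) y = c *\<^sub>C (V i ^^ m) (vmon V l (k(i := 0)) y)"
  using assms
proof (induction l)
  case Nil then show ?case by simp
next
  case (Cons j l)
  show ?case
  proof (cases "j = i")
    case True
    then have "i \<notin> set l" using Cons by simp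
    then have e: "vmon V l (k(i := m)) = vmon V l (k(i := 0))" by (intro vmon_cong) auto
    show ?thesis
      by (rule exI[of _ 1]) (simp only: True vmon_Cons_app e fun_upd_same funpow_0 scaleC_one one_neq_zero
          not_False_eq_True simp_thms)
  next
    case False
    then have il: "i \<in> set l" "distinct l" "set l \<subseteq> {1..n}" using Cons.prems by auto
    obtain c where c: "c \<noteq> 0" "vmon V l (k(i := m)) y = c *\<^sub>C (V i ^^ m) (vmon V l (k(i := 0)) y)"
      using Cons.IH[OF il(2,3,1)] by blast
    have jN: "j \<in> {1..n}" and iN: "i \<in> {1..n}" using Cons.prems by auto
    have "qc (V j ^^ k j) (V i ^^ m)"
      by (rule qc_pow_left[OF qc_pow_right[OF qc_all(1)[OF jN iN False] bclV[OF iN]] bclV[OF jN]])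
    then obtain d where d: "d \<noteq> 0" "\<And>x. (V j ^^ k j) ((V i ^^ m) x) = d *\<^sub>C (V i ^^ m) ((V j ^^ k j) x)"
      unfolding qc_def by blast
    have "vmon V (j # l) (k(i := m)) y = (V j ^^ k j) (c *\<^sub>C (V i ^^ m) (vmon V l (k(i := 0)) y))"
      using False c(2) by (simp add: vmon_Cons)
    also have "\<dots> = (c * d) *\<^sub>C (V i ^^ m) ((V j ^^ k j) (vmon V l (k(i := 0)) y))"
      by (simp add: bcl_scaleC[OF bcl_pow[OF bclV[OF jN]]] d(2) scaleC_scaleC)
    also have "\<dots> = (c * d) *\<^sub>C (V i ^^ m) (vmon V (j # l) (k(i := 0)) y)"
      using False by (simp add: vmon_Cons)
    finally have e: "vmon V (j # l) (k(i := m)) y = (c * d) *\<^sub>C (V i ^^ m) (vmon V (j # l) (k(i := 0)) y)" .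
    moreover have "c * d \<noteq> 0" using c(1) d(1) by simp
    ultimately show ?thesis by blast
  qed
qed

end

locale setting = dnc n z V Vs
  for n :: nat and z :: "nat \<Rightarrow> nat \<Rightarrow> complex" and V Vs :: "nat \<Rightarrow> 'a::chilbert_space \<Rightarrow> 'a" +
  fixes A :: "nat set" and ls ms :: "nat list"
  assumes A_sub: "A \<subseteq> {1..n}" and dls: "distinct ls" and sls: "set ls = A"
    and dms: "distinct ms" and sms: "set ms = {1..n} - A"
begin

definition Mi :: "nat \<Rightarrow> 'a set" where
  "Mi i = (if i \<in> A then H_iso (V i) (Vs i) else H_uni (V i))"

definition Pf :: "nat \<Rightarrow> 'a \<Rightarrow> 'a" where
  "Pf i = (if i \<in> A then orth_proj (H_iso (V i) (Vs i)) else orth_proj (H_uni (V i)))"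

lemma Mi_sub: "i \<in> {1..n} \<Longrightarrow> csubspace (Mi i)"
  unfolding Mi_def using iso.H_iso_sub[OF isoV] iso.H_uni_sub[OF isoV] by simp

lemma Mi_closed: "i \<in> {1..n} \<Longrightarrow> closed (Mi i)"
  unfolding Mi_def using iso.H_iso_closed[OF isoV] iso.H_uni_closed[OF isoV] by simp

lemma Mi_pres: assumes "a \<in> {1..n}" "i \<in> {1..n}" "i \<noteq> a" "y \<in> Mi i"
  shows "V a y \<in> Mi i" "Vs a y \<in> Mi i"
  using assms pres_iso[OF assms(1-3)] pres_uni[OF assms(1-3)] unfolding Mi_def by (auto split: if_splits)

lemma Mi_self: assumes "i \<in> {1..n}" "y \<in> Mi i" shows "V i y \<in> Mi i"
  using assms iso_self uni_self(1) unfolding Mi_def by (auto split: if_splits)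

lemma Pf_in: "i \<in> {1..n} \<Longrightarrow> Pf i y \<in> Mi i"
  unfolding Pf_def Mi_def using iso.proj_iso[OF isoV] iso.proj_uni[OF isoV] iso.iso_part[OF isoV] iso.PU_uni[OF isoV]
  by simp

lemma Pf_id: assumes "i \<in> {1..n}" "y \<in> Mi i" shows "Pf i y = y"
proof (cases "i \<in> A")
  case True then show ?thesis using assms unfolding Pf_def Mi_def
    by (simp add: orth_proj_id[OF iso.H_iso_sub[OF isoV[OF assms(1)]]])
next
  case False then show ?thesis using assms unfolding Pf_def Mi_def
    by (simp add: orth_proj_id[OF iso.H_uni_sub[OF isoV[OF assms(1)]]])
qed

lemma Pf_pres: assumes "a \<in> {1..n}" "i \<in> {1..n}" "i \<noteq> a" "y \<in> Mi i" shows "Pf a y \<in> Mi i"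
proof -
  have r: "iso.PU (V a) (Vs a) y \<in> Mi i" "y - iso.PU (V a) (Vs a) y \<in> Mi i"
    using iso.reduce[OF isoV[OF assms(1)] Mi_closed[OF assms(2)] Mi_sub[OF assms(2)]
          Mi_pres(1)[OF assms(1-3)] Mi_pres(2)[OF assms(1-3)] assms(4)] by auto
  show ?thesis unfolding Pf_def
    using r iso.proj_iso[OF isoV[OF assms(1)]] iso.proj_uni[OF isoV[OF assms(1)]] by simp
qed

lemma fold_in: "set l \<subseteq> {1..n} \<Longrightarrow> i \<in> set l \<Longrightarrow> foldr (\<circ>) (map Pf l) id x \<in> Mi i"
proof (induction l)
  case Nil then show ?case by simp
next
  case (Cons a l)
  have aN: "a \<in> {1..n}" using Cons by simp
  have f: "foldr (\<circ>) (map Pf (a # l)) id x = Pf a (foldr (\<circ>) (map Pf l) id x)" by simp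
  show ?case
  proof (cases "i = a")
    case True then show ?thesis unfolding f using Pf_in[OF aN] by simp
  next
    case False
    have iN: "i \<in> {1..n}" using Cons.prems by auto
    have "foldr (\<circ>) (map Pf l) id x \<in> Mi i" by (rule Cons.IH) (use Cons.prems False in auto)
    then show ?thesis unfolding f by (rule Pf_pres[OF aN iN False])
  qed
qed

lemma fold_id: "set l \<subseteq> {1..n} \<Longrightarrow> (\<forall>i\<in>{1..n}. x \<in> Mi i) \<Longrightarrow> foldr (\<circ>) (map Pf l) id x = x"
  by (induction l) (auto simp: Pf_id)

lemma HA_char: "H_A n V Vs A = {x. \<forall>i\<in>{1..n}. x \<in> Mi i}"
proof -
  have e: "(\<lambda>i. if i \<in> A then orth_proj (H_iso (V i) (Vs i)) else orth_proj (H_uni (V i))) = Pf"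
    unfolding Pf_def by (rule ext) simp
  have s: "set [1..<Suc n] = {1..n}" by auto
  show ?thesis unfolding H_A_def e
  proof (intro equalityI subsetI)
    fix x assume "x \<in> range (foldr (\<circ>) (map Pf [1..<Suc n]) id)"
    then obtain t where t: "x = foldr (\<circ>) (map Pf [1..<Suc n]) id t" by blast
    have "foldr (\<circ>) (map Pf [1..<Suc n]) id t \<in> Mi i" if "i \<in> {1..n}" for i
      by (rule fold_in) (simp_all only: s that subset_refl)
    then show "x \<in> {x. \<forall>i\<in>{1..n}. x \<in> Mi i}" using t by blast
  next
    fix x assume x: "x \<in> {x. \<forall>i\<in>{1..n}. x \<in> Mi i}"
    have "foldr (\<circ>) (map Pf [1..<Suc n]) id x = x"
      by (rule fold_id) (use x in \<open>simp_all only: s subset_refl mem_Collect_eq\<close>)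
    then show "x \<in> range (foldr (\<circ>) (map Pf [1..<Suc n]) id)" by (metis rangeI)
  qed
qed

end


context setting
begin

abbreviation W where "W \<equiv> W_A V Vs ls ms"

lemma lsN: "set ls \<subseteq> {1..n}" using sls A_sub by simp
lemma msN: "set ms \<subseteq> {1..n}" using sms by simp

lemma W_sup:
  assumes "set l \<subseteq> {1..n} - A" "\<forall>a\<in>A. Vs a u = 0" "\<forall>j\<in>set l. u \<in> H_uni (V j)"
  shows "\<exists>y. (\<forall>a\<in>A. Vs a y = 0) \<and> u = vmon V l m y"
  using assms
proof (induction l arbitrary: u)
  case Nil then show ?case by auto
next
  case (Cons j l)
  have jN: "j \<in> {1..n}" "j \<notin> A" using Cons.prems by auto
  interpret I: iso "V j" "Vs j" by (rule isoV[OF jN(1)])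
  define v where "v = (Vs j ^^ m j) u"
  have "u \<in> H_uni (V j)" using Cons.prems(3) by simp
  then have "u \<in> range (V j ^^ m j)" unfolding H_uni_def by blast
  then obtain t where t: "u = (V j ^^ m j) t" by blast
  have vt: "v = t" unfolding v_def t by simp
  have Kp: "\<forall>a\<in>A. Vs a y = 0 \<Longrightarrow> \<forall>a\<in>A. Vs a (Vs j y) = 0" for y
  proof
    fix a assume "\<forall>a\<in>A. Vs a y = 0" "a \<in> A"
    then have "y \<in> ker (Vs a)" "a \<in> {1..n}" "a \<noteq> j" using A_sub jN by (auto simp: ker_def)
    then show "Vs a (Vs j y) = 0" using pres_ker(2)[OF jN(1)] by (auto simp: ker_def)
  qed
  have vK: "\<forall>a\<in>A. Vs a v = 0" unfolding v_def
    by (rule pres_pow[where M="{y. \<forall>a\<in>A. Vs a y = 0}", simplified]) (use Kp Cons.prems in auto)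
  have vU: "\<forall>j'\<in>set l. v \<in> H_uni (V j')"
  proof
    fix j' assume j': "j' \<in> set l"
    then have j'N: "j' \<in> {1..n}" using Cons.prems by auto
    have "Vs j y \<in> H_uni (V j')" if "y \<in> H_uni (V j')" for y
      using uni_self(2)[OF jN(1)] pres_uni(2)[OF jN(1) j'N] that by (cases "j' = j") auto
    then show "v \<in> H_uni (V j')" unfolding v_def
      by (rule pres_pow) (use Cons.prems j' in auto)
  qed
  obtain y where y: "\<forall>a\<in>A. Vs a y = 0" "v = vmon V l m y"
    using Cons.IH[of v] Cons.prems(1) vK vU by auto
  have "u = vmon V (j # l) m y" unfolding vmon_Cons_app t using vt y(2) by simp
  then show ?case using y(1) by blast
qed

lemma W_char: "W = {x. (\<forall>a\<in>A. Vs a x = 0) \<and> (\<forall>j\<in>{1..n} - A. x \<in> H_uni (V j))}"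
proof (intro equalityI subsetI)
  fix x assume x: "x \<in> W"
  have K: "(\<Inter>i\<in>set ls. ker (Vs i)) = {x. \<forall>a\<in>A. Vs a x = 0}" using sls by (auto simp: ker_def)
  have xm: "x \<in> vmon V ms m ` {x. \<forall>a\<in>A. Vs a x = 0}" for m
    using x unfolding W_A_def K by blast
  have "x \<in> vmon V ms (\<lambda>_. 0) ` {x. \<forall>a\<in>A. Vs a x = 0}" by (rule xm)
  then have a: "\<forall>a\<in>A. Vs a x = 0" by (simp add: vmon_zero)
  have b: "x \<in> H_uni (V j)" if j: "j \<in> {1..n} - A" for j
    unfolding H_uni_def
  proof
    fix k
    have "j \<in> set ms" using j sms by simp
    then have "vmon V ms ((\<lambda>_. 0)(j := k)) = V j ^^ k" by (rule vmon_single[OF dms])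
    then show "x \<in> range (V j ^^ k)" using xm[of "(\<lambda>_. 0)(j := k)"] by auto
  qed
  show "x \<in> {x. (\<forall>a\<in>A. Vs a x = 0) \<and> (\<forall>j\<in>{1..n} - A. x \<in> H_uni (V j))}" using a b by blast
next
  fix x assume x: "x \<in> {x. (\<forall>a\<in>A. Vs a x = 0) \<and> (\<forall>j\<in>{1..n} - A. x \<in> H_uni (V j))}"
  have "x \<in> vmon V ms m ` (\<Inter>i\<in>set ls. ker (Vs i))" for m
  proof -
    obtain y where y: "\<forall>a\<in>A. Vs a y = 0" "x = vmon V ms m y"
      using W_sup[of ms x m] x sms by auto
    have "y \<in> (\<Inter>i\<in>set ls. ker (Vs i))" using y(1) sls by (auto simp: ker_def)
    then show ?thesis using y(2) by blast
  qed
  then show "x \<in> W" unfolding W_A_def by blast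
qed

lemma W_sub: "csubspace W"
  unfolding W_char csubspace_def
proof (intro conjI ballI allI)
  have aN: "a \<in> A \<Longrightarrow> a \<in> {1..n}" for a using A_sub by auto
  show "0 \<in> {x. (\<forall>a\<in>A. Vs a x = 0) \<and> (\<forall>j\<in>{1..n} - A. x \<in> H_uni (V j))}"
    using bcl_zero[OF bclVs] aN csubspace_0[OF iso.H_uni_sub[OF isoV]] by auto
  fix x y assume x: "x \<in> {x. (\<forall>a\<in>A. Vs a x = 0) \<and> (\<forall>j\<in>{1..n} - A. x \<in> H_uni (V j))}"
    and y: "y \<in> {x. (\<forall>a\<in>A. Vs a x = 0) \<and> (\<forall>j\<in>{1..n} - A. x \<in> H_uni (V j))}"
  show "x + y \<in> {x. (\<forall>a\<in>A. Vs a x = 0) \<and> (\<forall>j\<in>{1..n} - A. x \<in> H_uni (V j))}"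
    using x y bcl_add[OF bclVs] aN csubspace_add[OF iso.H_uni_sub[OF isoV]] by auto
next
  have aN: "a \<in> A \<Longrightarrow> a \<in> {1..n}" for a using A_sub by auto
  fix c x assume x: "x \<in> {x. (\<forall>a\<in>A. Vs a x = 0) \<and> (\<forall>j\<in>{1..n} - A. x \<in> H_uni (V j))}"
  show "c *\<^sub>C x \<in> {x. (\<forall>a\<in>A. Vs a x = 0) \<and> (\<forall>j\<in>{1..n} - A. x \<in> H_uni (V j))}"
    using x bcl_scaleC[OF bclVs] aN csubspace_scaleC[OF iso.H_uni_sub[OF isoV]] by auto
qed

lemma W_Mi: "w \<in> W \<Longrightarrow> i \<in> {1..n} \<Longrightarrow> w \<in> Mi i"
proof -
  assume w: "w \<in> W" and i: "i \<in> {1..n}"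
  show ?thesis
  proof (cases "i \<in> A")
    case True
    then have "w \<in> ker (Vs i)" using w unfolding W_char by (auto simp: ker_def)
    from gen_iso'[OF this, where T="V i" and k=0] show ?thesis using True unfolding Mi_def by simp
  next
    case False then show ?thesis using w i unfolding W_char Mi_def by auto
  qed
qed

lemma W_HA: "W \<subseteq> H_A n V Vs A"
  unfolding HA_char using W_Mi by blast

lemma HA_closed_sub: "closed (H_A n V Vs A)" "csubspace (H_A n V Vs A)"
proof -
  have e: "H_A n V Vs A = (\<Inter>i\<in>{1..n}. Mi i)" unfolding HA_char by auto
  show "closed (H_A n V Vs A)" unfolding e using Mi_closed by (intro closed_INT) blast
  show "csubspace (H_A n V Vs A)" unfolding e by (intro csubspace_INT) (rule Mi_sub)
qed

lemma sub_HA: "ccspan (\<Union>k. vmon V ls k ` W) \<subseteq> H_A n V Vs A"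
proof (rule ccspan_minimal[OF HA_closed_sub(2,1)])
  show "(\<Union>k. vmon V ls k ` W) \<subseteq> H_A n V Vs A"
  proof clarify
    fix k w assume w: "w \<in> W"
    have "vmon V ls k w \<in> Mi i" if i: "i \<in> {1..n}" for i
    proof (rule vmon_pres)
      fix j y assume j: "j \<in> set ls" "y \<in> Mi i"
      then have jN: "j \<in> {1..n}" using lsN by auto
      show "V j y \<in> Mi i" using Mi_self[OF i] Mi_pres(1)[OF jN i] j by (cases "i = j") auto
    qed (rule W_Mi[OF w i])
    then show "vmon V ls k w \<in> H_A n V Vs A" unfolding HA_char by blast
  qed
qed

lemma G:
  "distinct l \<Longrightarrow> set l \<subseteq> A \<Longrightarrow> (\<forall>i\<in>set l. x \<in> H_iso (V i) (Vs i)) \<Longrightarrow> (\<forall>b\<in>A - set l. Vs b x = 0)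
   \<Longrightarrow> (\<forall>j\<in>{1..n} - A. x \<in> H_uni (V j)) \<Longrightarrow> x \<in> ccspan (\<Union>k. vmon V l k ` W)"
proof (induction l arbitrary: x)
  case Nil
  then have "x \<in> W" unfolding W_char by simp
  moreover have "(\<Union>k. vmon V [] k ` W) = W" by simp
  ultimately show ?case by (metis subsetD[OF ccspan_superset])
next
  case (Cons a l)
  have a: "a \<in> A" "a \<notin> set l" "distinct l" "set l \<subseteq> A" using Cons.prems by auto
  have aN: "a \<in> {1..n}" using a A_sub by auto
  interpret I: iso "V a" "Vs a" by (rule isoV[OF aN])
  define C where "C = ccspan (\<Union>k. vmon V (a # l) k ` W)"
  have P: "I.E ((Vs a ^^ k) x) \<in> M"
    if M: "csubspace M" "\<And>t. t \<in> M \<Longrightarrow> V a t \<in> M" "\<And>t. t \<in> M \<Longrightarrow> Vs a t \<in> M" "x \<in> M" for M k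
  proof -
    have t: "(Vs a ^^ k) x \<in> M" by (rule pres_pow[OF M(3) M(4)])
    show ?thesis unfolding I.E_def by (rule csubspace_diff[OF M(1) t M(2)[OF M(3)[OF t]]])
  qed
  have trm: "(V a ^^ k) (I.E ((Vs a ^^ k) x)) \<in> C" for k
  proof -
    define y where "y = I.E ((Vs a ^^ k) x)"
    have y1: "\<forall>i\<in>set l. y \<in> H_iso (V i) (Vs i)"
    proof
      fix i assume i: "i \<in> set l"
      then have iN: "i \<in> {1..n}" and ia: "i \<noteq> a" using a A_sub by auto
      show "y \<in> H_iso (V i) (Vs i)" unfolding y_def
        by (rule P[OF iso.H_iso_sub[OF isoV[OF iN]] pres_iso(1)[OF aN iN ia] pres_iso(2)[OF aN iN ia]])
           (use Cons.prems i in auto)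
    qed
    have y2: "\<forall>b\<in>A - set l. Vs b y = 0"
    proof
      fix b assume b: "b \<in> A - set l"
      show "Vs b y = 0"
      proof (cases "b = a")
        case True then show ?thesis using I.E_ker unfolding y_def ker_def by simp
      next
        case False
        then have bN: "b \<in> {1..n}" using b A_sub by auto
        have xk: "x \<in> ker (Vs b)" using Cons.prems(4) b False by (auto simp: ker_def)
        have "y \<in> ker (Vs b)" unfolding y_def
          by (rule P[OF ker_sub[OF bN] pres_ker(1)[OF aN bN False] pres_ker(2)[OF aN bN False] xk])
        then show ?thesis by (simp add: ker_def)
      qed
    qed
    have y3: "\<forall>j\<in>{1..n} - A. y \<in> H_uni (V j)"
    proof
      fix j assume j: "j \<in> {1..n} - A"
      then have jN: "j \<in> {1..n}" and ja: "j \<noteq> a" using a by auto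
      show "y \<in> H_uni (V j)" unfolding y_def
        by (rule P[OF iso.H_uni_sub[OF isoV[OF jN]] pres_uni(1)[OF aN jN ja] pres_uni(2)[OF aN jN ja]])
           (use Cons.prems j in auto)
    qed
    have IH: "y \<in> ccspan (\<Union>k. vmon V l k ` W)" by (rule Cons.IH[OF a(3,4) y1 y2 y3])
    have "(V a ^^ k) ` (\<Union>k. vmon V l k ` W) \<subseteq> C"
    proof clarify
      fix k' w assume w: "w \<in> W"
      have "vmon V l (k'(a := k)) = vmon V l k'" using a(2) by (intro vmon_cong) auto
      then have "(V a ^^ k) (vmon V l k' w) = vmon V (a # l) (k'(a := k)) w"
        by (simp add: vmon_Cons_app)
      then have "(V a ^^ k) (vmon V l k' w) \<in> (\<Union>k. vmon V (a # l) k ` W)" using w by blast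
      then show "(V a ^^ k) (vmon V l k' w) \<in> C" unfolding C_def by (rule subsetD[OF ccspan_superset])
    qed
    note m = ccspan_map[OF bcl_pow[OF bclV[OF aN]] this[unfolded C_def]]
    have "(V a ^^ k) y \<in> (V a ^^ k) ` ccspan (\<Union>k. vmon V l k ` W)" using IH by (rule imageI)
    then have "(V a ^^ k) y \<in> C" unfolding C_def by (rule subsetD[OF m])
    then show ?thesis unfolding y_def .
  qed
  have "x \<in> H_iso (V a) (Vs a)" using Cons.prems(3) by simp
  from I.Q_tends_iso[OF this]
  have lim: "(\<lambda>K. \<Sum>k<K. (V a ^^ k) (I.E ((Vs a ^^ k) x))) \<longlonglongrightarrow> x" .
  have s: "(\<Sum>k<K. (V a ^^ k) (I.E ((Vs a ^^ k) x))) \<in> C" for K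
    unfolding C_def by (rule csubspace_sum[OF csubspace_ccspan]) (use trm in \<open>simp add: C_def\<close>)
  have cC: "closed C" unfolding C_def by (rule closed_ccspan)
  have "x \<in> C" by (rule closed_in_limit[OF cC s lim])
  then show ?case unfolding C_def .
qed

lemma HA_sub: "H_A n V Vs A \<subseteq> ccspan (\<Union>k. vmon V ls k ` W)"
proof
  fix x assume "x \<in> H_A n V Vs A"
  then have x: "\<forall>i\<in>{1..n}. x \<in> Mi i" unfolding HA_char by simp
  show "x \<in> ccspan (\<Union>k. vmon V ls k ` W)"
  proof (rule G[OF dls])
    show "set ls \<subseteq> A" using sls by simp
    show "\<forall>i\<in>set ls. x \<in> H_iso (V i) (Vs i)"
    proof
      fix i assume "i \<in> set ls"
      then have i: "i \<in> A" "i \<in> {1..n}" using sls A_sub by auto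
      then have "x \<in> Mi i" using x by blast
      then show "x \<in> H_iso (V i) (Vs i)" using i(1) unfolding Mi_def by simp
    qed
    show "\<forall>b\<in>A - set ls. Vs b x = 0" using sls by simp
    show "\<forall>j\<in>{1..n} - A. x \<in> H_uni (V j)" using x unfolding Mi_def by auto
  qed
qed

end


context setting
begin

lemma orth_lt:
  assumes i: "i \<in> A" and lt: "k i < k' i" and w: "w \<in> W" and w': "w' \<in> W"
  shows "cinner (vmon V ls k w) (vmon V ls k' w') = 0"
proof -
  have iN: "i \<in> {1..n}" using i A_sub by auto
  have il: "i \<in> set ls" using i sls by simp
  interpret I: iso "V i" "Vs i" by (rule isoV[OF iN])
  obtain c where c: "vmon V ls (k(i := k i)) w = c *\<^sub>C (V i ^^ k i) (vmon V ls (k(i := 0)) w)"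
    using pull[OF dls lsN il] by blast
  obtain c' where c': "vmon V ls (k'(i := k' i)) w' = c' *\<^sub>C (V i ^^ k' i) (vmon V ls (k'(i := 0)) w')"
    using pull[OF dls lsN il] by blast
  define u where "u = vmon V ls (k(i := 0)) w"
  define u' where "u' = vmon V ls (k'(i := 0)) w'"
  have wk: "w \<in> ker (Vs i)" using w i unfolding W_char by (simp add: ker_def)
  have uk: "u \<in> ker (Vs i)" unfolding u_def by (rule vmon_ker[OF lsN iN _ wk]) simp
  define d where "d = k' i - k i - 1"
  have kd: "k' i = k i + Suc d" unfolding d_def using lt by simp
  have e: "(V i ^^ k' i) u' = (V i ^^ k i) (V i ((V i ^^ d) u'))"
    unfolding kd funpow_add by simp
  have "cinner (vmon V ls k w) (vmon V ls k' w') =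
        cinner (c *\<^sub>C (V i ^^ k i) u) (c' *\<^sub>C (V i ^^ k' i) u')"
    using c c' unfolding u_def u'_def by simp
  also have "\<dots> = cnj c * c' * cinner ((V i ^^ k i) u) ((V i ^^ k i) (V i ((V i ^^ d) u')))"
    unfolding e by (simp add: cinner_scaleC_left cinner_scaleC_right)
  also have "\<dots> = cnj c * c' * cinner (Vs i u) ((V i ^^ d) u')"
    by (simp add: I.Sk_inner I.adj2)
  also have "\<dots> = 0" using uk by (simp add: ker_def)
  finally show ?thesis .
qed

lemma orth_part: "\<forall>k k'. (\<exists>i\<in>A. k i \<noteq> k' i) \<longrightarrow> corthogonal (vmon V ls k ` W) (vmon V ls k' ` W)"
proof (intro allI impI)
  fix k k' :: "nat \<Rightarrow> nat" assume "\<exists>i\<in>A. k i \<noteq> k' i"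
  then obtain i where i: "i \<in> A" "k i \<noteq> k' i" by blast
  show "corthogonal (vmon V ls k ` W) (vmon V ls k' ` W)"
    unfolding corthogonal_def
  proof (intro ballI)
    fix p q assume p: "p \<in> vmon V ls k ` W" and q: "q \<in> vmon V ls k' ` W"
    then obtain w w' where w: "w \<in> W" "p = vmon V ls k w" and w': "w' \<in> W" "q = vmon V ls k' w'" by blast
    show "cinner p q = 0"
    proof (cases "k i < k' i")
      case True then show ?thesis using orth_lt[where k=k and k'=k', OF i(1) True w(1) w'(1)] w w' by simp
    next
      case False
      then have "k' i < k i" using i(2) by simp
      from orth_lt[where k=k' and k'=k, OF i(1) this w'(1) w(1)] have "cinner q p = 0" using w w' by simp
      then show ?thesis by (metis cinner_commute complex_cnj_zero)
    qed
  qed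
qed

lemma d_part: "\<forall>i\<in>{1..n} - A. V i ` W \<subseteq> W \<and> Vs i ` W \<subseteq> W \<and> V i ` W = W"
proof
  fix i assume i: "i \<in> {1..n} - A"
  then have iN: "i \<in> {1..n}" and iA: "i \<notin> A" by auto
  have pres: "V i x \<in> W \<and> Vs i x \<in> W" if x: "x \<in> W" for x
  proof -
    have xa: "\<forall>a\<in>A. Vs a x = 0" and xu: "\<forall>j\<in>{1..n} - A. x \<in> H_uni (V j)" using x unfolding W_char by auto
    have ka: "V i x \<in> ker (Vs a) \<and> Vs i x \<in> ker (Vs a)" if a: "a \<in> A" for a
    proof -
      have aN: "a \<in> {1..n}" and ai: "a \<noteq> i" using a A_sub iA by auto
      have "x \<in> ker (Vs a)" using xa a by (simp add: ker_def)
      then show ?thesis using pres_ker[OF iN aN ai] by simp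
    qed
    have ku: "V i x \<in> H_uni (V j) \<and> Vs i x \<in> H_uni (V j)" if j: "j \<in> {1..n} - A" for j
    proof (cases "j = i")
      case True then show ?thesis using uni_self[OF iN] xu iN iA by simp
    next
      case False
      have jN: "j \<in> {1..n}" using j by simp
      show ?thesis using pres_uni[OF iN jN False] xu j by simp
    qed
    show ?thesis unfolding W_char using ka ku by (simp add: ker_def)
  qed
  have surj: "W \<subseteq> V i ` W"
  proof
    fix x assume x: "x \<in> W"
    then have "x \<in> H_uni (V i)" using i unfolding W_char by simp
    then have "x \<in> range (V i ^^ 1)" unfolding H_uni_def by blast
    then obtain t where t: "x = V i t" by auto
    then have "V i (Vs i x) = x" using VsV[OF iN] by simp
    moreover have "Vs i x \<in> W" using pres[OF x] by simp
    ultimately show "x \<in> V i ` W" by (metis imageI)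
  qed
  show "V i ` W \<subseteq> W \<and> Vs i ` W \<subseteq> W \<and> V i ` W = W" using pres surj by blast
qed

lemma e_part: "\<forall>i\<in>{1..n} - A. \<forall>j\<in>{1..n} - A. i \<noteq> j \<longrightarrow>
          (\<forall>S. is_adjoint_on W (V i) S \<longrightarrow> (\<forall>x\<in>W. S (V j x) = cnj (z i j) *\<^sub>C V j (S x)))"
proof (intro ballI impI allI)
  fix i j S x assume i: "i \<in> {1..n} - A" and j: "j \<in> {1..n} - A" and ij: "i \<noteq> j"
    and S: "is_adjoint_on W (V i) S" and x: "x \<in> W"
  have iN: "i \<in> {1..n}" and jN: "j \<in> {1..n}" using i j by auto
  interpret I: iso "V i" "Vs i" by (rule isoV[OF iN])
  have SW: "\<And>y. y \<in> W \<Longrightarrow> S y \<in> W" and Sa: "\<And>p q. p \<in> W \<Longrightarrow> q \<in> W \<Longrightarrow> cinner (V i p) q = cinner p (S q)"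
    using S unfolding is_adjoint_on_def by auto
  have Seq: "S y = Vs i y" if y: "y \<in> W" for y
  proof -
    have VsW: "Vs i y \<in> W" using d_part i y by blast
    define d where "d = S y - Vs i y"
    have dW: "d \<in> W" unfolding d_def by (rule csubspace_diff[OF W_sub SW[OF y] VsW])
    have "cinner d d = cinner d (S y) - cinner d (Vs i y)" unfolding d_def by (simp add: cinner_diff_right)
    also have "\<dots> = 0" using Sa[OF dW y] I.adj1[of d y] by simp
    finally show ?thesis unfolding d_def by simp
  qed
  have VjW: "V j x \<in> W" using d_part j x by blast
  show "S (V j x) = cnj (z i j) *\<^sub>C V j (S x)"
    using Seq[OF VjW] Seq[OF x] C1[OF iN jN ij] by simp
qed

lemma f_part: "\<forall>i\<in>A. \<forall>x\<in>W. Vs i x = 0"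
  unfolding W_char by blast

lemma step:
  assumes r: "r < length ls"
  shows "\<exists>c. c \<noteq> 0 \<and> V (ls ! r) (vmon V ls k y) = c *\<^sub>C vmon V ls (k(ls ! r := Suc (k (ls ! r)))) y"
proof -
  define i where "i = ls ! r"
  have il: "i \<in> set ls" unfolding i_def using r by simp
  have iN: "i \<in> {1..n}" using il lsN by auto
  define u where "u = vmon V ls (k(i := 0)) y"
  obtain c2 where c2: "c2 \<noteq> 0" "vmon V ls (k(i := k i)) y = c2 *\<^sub>C (V i ^^ k i) u"
    using pull[OF dls lsN il] unfolding u_def by blast
  obtain c1 where c1: "c1 \<noteq> 0" "vmon V ls (k(i := Suc (k i))) y = c1 *\<^sub>C (V i ^^ Suc (k i)) u"
    using pull[OF dls lsN il] unfolding u_def by blast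
  have "V i (vmon V ls k y) = c2 *\<^sub>C V i ((V i ^^ k i) u)"
    using c2(2) bcl_scaleC[OF bclV[OF iN]] by simp
  also have "\<dots> = c2 *\<^sub>C (V i ^^ Suc (k i)) u" by simp
  also have "\<dots> = (c2 * inverse c1) *\<^sub>C vmon V ls (k(i := Suc (k i))) y"
  proof -
    have cc: "c2 * inverse c1 * c1 = c2" using c1(1) by (simp add: mult.assoc)
    show ?thesis using c1(2) by (simp add: scaleC_scaleC cc)
  qed
  finally show ?thesis unfolding i_def[symmetric] using c1(1) c2(1) by (intro exI[of _ "c2 * inverse c1"]) simp
qed

lemma g_part: "\<forall>r<length ls. \<forall>k. V (ls ! r) ` (vmon V ls k ` W)
          = vmon V ls (k(ls ! r := Suc (k (ls ! r)))) ` W"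
proof (intro allI impI)
  fix r k assume r: "r < length ls"
  define k1 where "k1 = k(ls ! r := Suc (k (ls ! r)))"
  have iN: "ls ! r \<in> {1..n}" using r lsN nth_mem by blast
  have b: "bounded_clinear (vmon V ls k1)" "bounded_clinear (vmon V ls k)" by (intro vmon_bcl lsN)+
  show "V (ls ! r) ` (vmon V ls k ` W) = vmon V ls (k(ls ! r := Suc (k (ls ! r)))) ` W"
    unfolding k1_def[symmetric]
  proof (intro equalityI subsetI)
    fix p assume "p \<in> V (ls ! r) ` (vmon V ls k ` W)"
    then obtain y where y: "y \<in> W" "p = V (ls ! r) (vmon V ls k y)" by blast
    obtain c where c: "c \<noteq> 0" "V (ls ! r) (vmon V ls k y) = c *\<^sub>C vmon V ls k1 y"
      using step[OF r, of k y] unfolding k1_def by blast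
    have "p = vmon V ls k1 (c *\<^sub>C y)" using y c bcl_scaleC[OF b(1)] by simp
    moreover have "c *\<^sub>C y \<in> W" by (rule csubspace_scaleC[OF W_sub y(1)])
    ultimately show "p \<in> vmon V ls k1 ` W" by blast
  next
    fix p assume "p \<in> vmon V ls k1 ` W"
    then obtain y where y: "y \<in> W" "p = vmon V ls k1 y" by blast
    obtain c where c: "c \<noteq> 0" "V (ls ! r) (vmon V ls k y) = c *\<^sub>C vmon V ls k1 y"
      using step[OF r, of k y] unfolding k1_def by blast
    have "p = inverse c *\<^sub>C V (ls ! r) (vmon V ls k y)" using y c by (simp add: scaleC_scaleC scaleC_one)
    also have "\<dots> = V (ls ! r) (vmon V ls k (inverse c *\<^sub>C y))"
      using bcl_scaleC[OF b(2)] bcl_scaleC[OF bclV[OF iN]] by simp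
    finally have "p = V (ls ! r) (vmon V ls k (inverse c *\<^sub>C y))" .
    moreover have "inverse c *\<^sub>C y \<in> W" by (rule csubspace_scaleC[OF W_sub y(1)])
    ultimately show "p \<in> V (ls ! r) ` (vmon V ls k ` W)" by blast
  qed
qed

end

theorem theorem3p6:
  fixes n :: nat and z :: "nat \<Rightarrow> nat \<Rightarrow> complex"
    and V Vs :: "nat \<Rightarrow> 'a::chilbert_space \<Rightarrow> 'a"
    and A :: "nat set" and "is" js :: "nat list"
  assumes "n \<ge> 1"
    and dnc: "doubly_noncommuting n z V Vs"
    and "A \<subseteq> {1..n}"
    and "distinct is" and "set is = A"
    and "distinct js" and "set js = {1..n} - A"
  defines "W \<equiv> W_A V Vs is js"
  shows "W \<subseteq> H_A n V Vs A
    \<and> H_A n V Vs A = ccspan (\<Union>k. vmon V is k ` W)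
    \<and> (\<forall>k k'. (\<exists>i\<in>A. k i \<noteq> k' i) \<longrightarrow> corthogonal (vmon V is k ` W) (vmon V is k' ` W))
    \<and> (\<forall>i\<in>{1..n} - A. V i ` W \<subseteq> W \<and> Vs i ` W \<subseteq> W \<and> V i ` W = W)
    \<and> (\<forall>i\<in>{1..n} - A. \<forall>j\<in>{1..n} - A. i \<noteq> j \<longrightarrow>
          (\<forall>S. is_adjoint_on W (V i) S \<longrightarrow>
             (\<forall>x\<in>W. S (V j x) = cnj (z i j) *\<^sub>C V j (S x))))
    \<and> (\<forall>i\<in>A. \<forall>x\<in>W. Vs i x = 0)
    \<and> (\<forall>r<length is. \<forall>k. V (is ! r) ` (vmon V is k ` W)
          = vmon V is (k(is ! r := Suc (k (is ! r)))) ` W)"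
proof -
  interpret S: setting n z V Vs A "is" js
    using assms by (unfold_locales) auto
  show ?thesis unfolding W_def
  proof (intro conjI)
    show "W_A V Vs is js \<subseteq> H_A n V Vs A" by (rule S.W_HA)
    show "H_A n V Vs A = ccspan (\<Union>k. vmon V is k ` W_A V Vs is js)"
      by (rule equalityI[OF S.HA_sub S.sub_HA])
  qed (rule S.orth_part S.d_part S.e_part S.f_part S.g_part)+
qed

end
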